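(* For $\mathbb P_F$-almost every realization $f:\mathbb Z\to[-c,c]$ of $F$ the following holds: if $(t_n)$ is a sequence with $t_n\ge1$ and $t_n\to t$, then \[ \lim_{n\to\infty}\frac{\bar A(B,f;\lceil t_nn\rceil,n)}{n}=-t\,\Lambda(1/t)\quad\mathbb P_B\text{-almost surely}, \qquad \lim_{n\to\infty}\frac{\mathbb E_B\bar A(B,f;\lceil t_nn\rceil,n)}{n}=-t\,\Lambda(1/t). \]
   Context: Let $c>0$, $q>0$, $\kappa>-1$. $F=(F(x))_{x\in\mathbb Z}$ and $B=(B(i))_{i\in\mathbb Z}$ are mutually independent families of i.i.d. random variables, $\mathbb P(B(i)=\pm1)=1/2$, and $F(x)$ has a density $\varrho$ that is even, continuous, strictly positive on $(-c,c)$, zero outside $(-c,c)$, with $\lim_{x\to c}\varrho(x)/|c-x|^{\kappa}=q$. $\mathbb P_F,\mathbb P_B$ denote the laws of $F$ and $B$, and $\mathbb E_B$ expectation over $B$ only. A lazy walk satisfies $|\gamma(i+1)-\gamma(i)|\le1$; for $f:\mathbb Z\to[-c,c]$ the action of a lazy walk $\gamma$ on $\{0,\dots,m\}$ is $A(B,f;\gamma)=\sum_{i=1}^mB(i)f(\gamma(i))$, and $\bar A(B,f;m,k)$ is the minimal action over lazy walks from $(0,0)$ to $(m,k)$. The shape function $\Lambda:[-1,1]\to[0,c]$ is the deterministic function with $\bar A(B,F;n,[\alpha n])/n\to-\Lambda(\alpha)$ almost surely, $[\cdot]$ rounding towards $0$. *)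

theory Defs
  imports "HOL-Probability.Probability"
begin

definition lazy_walk :: "(nat \<Rightarrow> int) \<Rightarrow> nat \<Rightarrow> bool" where
  "lazy_walk \<gamma> m \<longleftrightarrow> (\<forall>i<m. \<bar>\<gamma> (Suc i) - \<gamma> i\<bar> \<le> 1)"

definition action :: "(int \<Rightarrow> real) \<Rightarrow> (int \<Rightarrow> real) \<Rightarrow> (nat \<Rightarrow> int) \<Rightarrow> nat \<Rightarrow> real" where
  "action b f \<gamma> m = (\<Sum>i=1..m. b (int i) * f (\<gamma> i))"

definition min_action :: "(int \<Rightarrow> real) \<Rightarrow> (int \<Rightarrow> real) \<Rightarrow> nat \<Rightarrow> int \<Rightarrow> real" where
  "min_action b f m k =
     Inf {action b f \<gamma> m | \<gamma>. lazy_walk \<gamma> m \<and> \<gamma> 0 = 0 \<and> \<gamma> m = k}"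

definition round0 :: "real \<Rightarrow> int" where
  "round0 x = (if x \<ge> 0 then \<lfloor>x\<rfloor> else \<lceil>x\<rceil>)"

definition law_F :: "(real \<Rightarrow> real) \<Rightarrow> (int \<Rightarrow> real) measure" where
  "law_F \<rho> = (\<Pi>\<^sub>M i\<in>(UNIV::int set). density lborel (\<lambda>x. ennreal (\<rho> x)))"

definition law_B :: "(int \<Rightarrow> real) measure" where
  "law_B = (\<Pi>\<^sub>M i\<in>(UNIV::int set). measure_pmf (pmf_of_set {-1, 1::real}))"

definition is_shape_function :: "(real \<Rightarrow> real) \<Rightarrow> (real \<Rightarrow> real) \<Rightarrow> bool" where
  "is_shape_function \<rho> \<Lambda> \<longleftrightarrow>
     (\<forall>\<alpha>\<in>{-1..1}. AE \<omega> in (law_F \<rho> \<Otimes>\<^sub>M law_B).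
        (\<lambda>n. min_action (snd \<omega>) (fst \<omega>) n (round0 (\<alpha> * real n)) / real n)
          \<longlonglongrightarrow> - \<Lambda> \<alpha>)"

end

theory Submission
  imports Defs
begin

lemma min_action_set_finite:
  "finite {action b f \<gamma> m | \<gamma>. lazy_walk \<gamma> m \<and> \<gamma> 0 = 0 \<and> \<gamma> m = k}"
proof -
  define S where "S = {0..<m} \<rightarrow>\<^sub>E {-1,0,1::int}"
  define w where "w s i = (\<Sum>j<i. s j)" for s :: "nat \<Rightarrow> int" and i
  have fin: "finite S" unfolding S_def by (simp add: finite_PiE)
  have "{action b f \<gamma> m | \<gamma>. lazy_walk \<gamma> m \<and> \<gamma> 0 = 0 \<and> \<gamma> m = k}
        \<subseteq> (\<lambda>s. action b f (w s) m) ` S"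
  proof
    fix a assume "a \<in> {action b f \<gamma> m | \<gamma>. lazy_walk \<gamma> m \<and> \<gamma> 0 = 0 \<and> \<gamma> m = k}"
    then obtain \<gamma> where a: "a = action b f \<gamma> m" and lw: "lazy_walk \<gamma> m" and g0: "\<gamma> 0 = 0" by auto
    define s where "s = restrict (\<lambda>j. \<gamma> (Suc j) - \<gamma> j) {0..<m}"
    have sS: "s \<in> S" unfolding S_def s_def using lw unfolding lazy_walk_def by (auto simp: abs_le_iff)
    have "w s i = \<gamma> i" if "i \<le> m" for i
    proof -
      have "w s i = (\<Sum>j<i. \<gamma> (Suc j) - \<gamma> j)" unfolding w_def s_def using that by (intro sum.cong) auto
      also have "\<dots> = \<gamma> i - \<gamma> 0" by (rule sum_lessThan_telescope)
      finally show ?thesis using g0 by simp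
    qed
    then have "action b f (w s) m = action b f \<gamma> m" unfolding action_def by (intro sum.cong) auto
    then show "a \<in> (\<lambda>s. action b f (w s) m) ` S" using a sS by force
  qed
  then show ?thesis using fin finite_subset by blast
qed

lemma min_action_le:
  assumes "lazy_walk \<gamma> m" "\<gamma> 0 = 0" "\<gamma> m = k"
  shows "min_action b f m k \<le> action b f \<gamma> m"
  unfolding min_action_def
  by (rule cInf_lower) (use assms min_action_set_finite in \<open>auto intro: bdd_below_finite\<close>)

lemma walk_exists:
  assumes "\<bar>k\<bar> \<le> int m"
  shows "\<exists>\<gamma>. lazy_walk \<gamma> m \<and> \<gamma> 0 = 0 \<and> \<gamma> m = k"
proof -
  define \<gamma> where "\<gamma> i = sgn k * int (min i (nat \<bar>k\<bar>))" for i
  have "lazy_walk \<gamma> m" unfolding lazy_walk_def \<gamma>_def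
  proof (intro allI impI)
    fix i assume "i < m"
    show "\<bar>sgn k * int (min (Suc i) (nat \<bar>k\<bar>)) - sgn k * int (min i (nat \<bar>k\<bar>))\<bar> \<le> 1"
      by (cases "k < 0"; cases "k = 0"; cases "i < nat \<bar>k\<bar>") (auto simp: min_def)
  qed
  moreover have "\<gamma> m = k" unfolding \<gamma>_def using assms
    by (cases "k < 0"; cases "k = 0") (auto simp: min_def)
  ultimately show ?thesis by (auto simp: \<gamma>_def)
qed

lemma min_action_attained:
  assumes "\<bar>k\<bar> \<le> int m"
  shows "\<exists>\<gamma>. lazy_walk \<gamma> m \<and> \<gamma> 0 = 0 \<and> \<gamma> m = k \<and> min_action b f m k = action b f \<gamma> m"
proof -
  let ?X = "{action b f \<gamma> m | \<gamma>. lazy_walk \<gamma> m \<and> \<gamma> 0 = 0 \<and> \<gamma> m = k}"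
  have ne: "?X \<noteq> {}" using walk_exists[OF assms] by auto
  have fin: "finite ?X" by (rule min_action_set_finite)
  have "Inf ?X = Min ?X" using fin ne by (rule cInf_eq_Min)
  moreover have "Min ?X \<in> ?X" using fin ne by (rule Min_in)
  ultimately have "Inf ?X \<in> ?X" by simp
  then obtain \<gamma> where "lazy_walk \<gamma> m" "\<gamma> 0 = 0" "\<gamma> m = k" "Inf ?X = action b f \<gamma> m" by auto
  then show ?thesis unfolding min_action_def by auto
qed

lemma action_bound:
  assumes "\<And>i. \<bar>b i\<bar> \<le> 1" "\<And>x. \<bar>f x\<bar> \<le> c"
  shows "\<bar>action b f \<gamma> m\<bar> \<le> c * m"
proof -
  have "\<bar>action b f \<gamma> m\<bar> \<le> (\<Sum>i=1..m. \<bar>b (int i) * f (\<gamma> i)\<bar>)"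
    unfolding action_def by (rule sum_abs)
  also have "\<dots> \<le> (\<Sum>i=1..m. c)"
  proof (intro sum_mono)
    fix i
    have "\<bar>b (int i)\<bar> * \<bar>f (\<gamma> i)\<bar> \<le> 1 * c"
      using assms by (intro mult_mono) (auto intro: order_trans[OF abs_ge_zero])
    then show "\<bar>b (int i) * f (\<gamma> i)\<bar> \<le> c" by (simp add: abs_mult)
  qed
  finally show ?thesis by (simp add: mult.commute)
qed

lemma min_action_bound:
  assumes "\<And>i. \<bar>b i\<bar> \<le> 1" "\<And>x. \<bar>f x\<bar> \<le> c" "\<bar>k\<bar> \<le> int m"
  shows "\<bar>min_action b f m k\<bar> \<le> c * m"
proof -
  obtain \<gamma> where "min_action b f m k = action b f \<gamma> m"
    using min_action_attained[OF assms(3), of b f] by blast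
  moreover have "\<bar>action b f \<gamma> m\<bar> \<le> c * m" by (rule action_bound[OF assms(1,2)])
  ultimately show ?thesis by simp
qed

lemma min_action_extend:
  assumes b: "\<And>i. \<bar>b i\<bar> \<le> 1" and f: "\<And>x. \<bar>f x\<bar> \<le> c"
    and k: "\<bar>k\<bar> \<le> int m" and mm: "m \<le> m'" and kk: "\<bar>k' - k\<bar> \<le> int m' - int m"
  shows "min_action b f m' k' \<le> min_action b f m k + c * (real m' - real m)"
proof -
  obtain \<gamma> where g: "lazy_walk \<gamma> m" "\<gamma> 0 = 0" "\<gamma> m = k" "min_action b f m k = action b f \<gamma> m"
    using min_action_attained[OF k] by blast
  define d where "d = nat \<bar>k' - k\<bar>"
  define \<gamma>' where "\<gamma>' i = (if i \<le> m then \<gamma> i else k + sgn (k' - k) * int (min (i - m) d))" for i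
  have lw: "lazy_walk \<gamma>' m'" unfolding lazy_walk_def
  proof (intro allI impI)
    fix i assume i: "i < m'"
    show "\<bar>\<gamma>' (Suc i) - \<gamma>' i\<bar> \<le> 1"
    proof (cases "i < m")
      case True then show ?thesis using g(1) unfolding \<gamma>'_def lazy_walk_def by auto
    next
      case False
      then have "Suc i - m = Suc (i - m)" by auto
      then show ?thesis using False g(3) unfolding \<gamma>'_def
        by (cases "k' - k < 0"; cases "k' = k"; cases "i - m < d") (auto simp: min_def)
    qed
  qed
  have g0: "\<gamma>' 0 = 0" using g by (simp add: \<gamma>'_def)
  have gm: "\<gamma>' m' = k'"
  proof (cases "m' = m")
    case True then show ?thesis using kk g(3) by (simp add: \<gamma>'_def)
  next
    case False
    then have "min (m' - m) d = d" using kk mm by (auto simp: d_def min_def)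
    then show ?thesis using False mm unfolding \<gamma>'_def d_def
      by (cases "k' - k < 0"; cases "k' = k") auto
  qed
  obtain p where p: "m' = m + p" using mm le_Suc_ex by blast
  have "action b f \<gamma>' m' = (\<Sum>i=1..m. b (int i) * f (\<gamma>' i)) + (\<Sum>i=m+1..m+p. b (int i) * f (\<gamma>' i))"
    unfolding action_def p by (rule sum.ub_add_nat) simp
  also have "(\<Sum>i=1..m. b (int i) * f (\<gamma>' i)) = action b f \<gamma> m"
    unfolding action_def by (intro sum.cong) (auto simp: \<gamma>'_def)
  also have "(\<Sum>i=m+1..m+p. b (int i) * f (\<gamma>' i)) \<le> (\<Sum>i=m+1..m+p. c)"
  proof (intro sum_mono)
    fix i
    have "\<bar>b (int i)\<bar> * \<bar>f (\<gamma>' i)\<bar> \<le> 1 * c"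
      using b f by (intro mult_mono) (auto intro: order_trans[OF abs_ge_zero])
    then show "b (int i) * f (\<gamma>' i) \<le> c"
      using abs_ge_self[of "b (int i) * f (\<gamma>' i)"] by (simp add: abs_mult)
  qed
  finally have "action b f \<gamma>' m' \<le> action b f \<gamma> m + c * p" by (simp add: mult.commute)
  moreover have "min_action b f m' k' \<le> action b f \<gamma>' m'" by (rule min_action_le[OF lw g0 gm])
  ultimately show ?thesis using g(4) p by simp
qed

abbreviation Mp :: "real measure" where "Mp \<equiv> measure_pmf (pmf_of_set {-1, 1::real})"

lemma law_B_eq: "law_B = PiM UNIV (\<lambda>_::int. Mp)"
  unfolding law_B_def by simp

interpretation PB: product_prob_space "\<lambda>_::int. Mp" UNIV
  by (rule product_prob_spaceI) (rule measure_pmf.prob_space_axioms)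

lemma prob_B: "prob_space law_B"
  unfolding law_B_eq by (rule prob_space_PiM) (rule measure_pmf.prob_space_axioms)

lemma meas_coord [measurable]: "(\<lambda>b. b i) \<in> borel_measurable law_B"
proof -
  have "(\<lambda>b. b i) \<in> measurable law_B Mp" unfolding law_B_eq
    by (rule measurable_component_singleton) simp
  moreover have "(\<lambda>x. x) \<in> measurable Mp borel" by simp
  ultimately show ?thesis by (rule measurable_compose)
qed

lemma AE_B_sign: "AE b in law_B. \<forall>i. b i \<in> {-1, 1}"
proof -
  have "AE b in law_B. b i \<in> {-1, 1}" for i
    unfolding law_B_eq
    by (rule PB.AE_component) (auto simp: AE_measure_pmf_iff set_pmf_of_set)
  then show ?thesis by (subst AE_ball_countable[where X=UNIV, simplified]) auto
qed

lemma AE_B_abs: "AE b in law_B. \<forall>i. \<bar>b i\<bar> \<le> 1"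
  using AE_B_sign
proof eventually_elim
  case (elim b)
  show ?case
  proof
    fix i
    from elim have "b i = -1 \<or> b i = 1" by auto
    then show "\<bar>b i\<bar> \<le> 1" by auto
  qed
qed

lemma indepB:
  assumes "J \<noteq> {}" "finite J"
  shows "prob_space.indep_vars law_B (\<lambda>_. Mp) (\<lambda>j b. b j) J"
proof -
  interpret prob_space law_B by (rule prob_B)
  have rv: "random_variable Mp (\<lambda>b. b j)" for j
    unfolding law_B_eq by (rule measurable_component_singleton) simp
  show ?thesis
  proof (subst indep_vars_iff_distr_eq_PiM[OF assms(1) rv])
    have "distr law_B (PiM J (\<lambda>_. Mp)) (\<lambda>x. \<lambda>i\<in>J. x i) = PiM J (\<lambda>_. Mp)"
      unfolding law_B_eq by (rule PB.distr_PiM_restrict_finite) (use assms in auto)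
    also have "\<dots> = PiM J (\<lambda>i. distr law_B Mp (\<lambda>x. x i))"
      unfolding law_B_eq by (intro PiM_cong refl PB.PiM_component[symmetric]) simp
    finally show "distr law_B (PiM J (\<lambda>_. Mp)) (\<lambda>x. \<lambda>i\<in>J. x i) = PiM J (\<lambda>i. distr law_B Mp (\<lambda>x. x i))" .
  qed
qed

lemma expect_coord: "integral\<^sup>L law_B (\<lambda>b. b j) = 0"
proof -
  have "integral\<^sup>L law_B (\<lambda>b. b j) = integral\<^sup>L (distr law_B Mp (\<lambda>b. b j)) (\<lambda>x. x)"
    by (subst integral_distr) (auto simp: law_B_eq intro: measurable_component_singleton)
  also have "distr law_B Mp (\<lambda>b. b j) = Mp"
    unfolding law_B_eq by (rule PB.PiM_component) simp
  also have "integral\<^sup>L Mp (\<lambda>x. x) = 0"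
    by (subst integral_pmf_of_set) auto
  finally show ?thesis .
qed

lemma hoeffB:
  fixes a :: "int \<Rightarrow> real"
  assumes J: "finite J" "J \<noteq> {}" and a: "\<And>j. j \<in> J \<Longrightarrow> \<bar>a j\<bar> \<le> c" and c: "c > 0" and x: "x \<ge> 0"
  shows "measure law_B {b \<in> space law_B. (\<Sum>j\<in>J. b j * a j) \<le> -x} \<le> exp (- x\<^sup>2 / (2 * c\<^sup>2 * card J))"
proof -
  interpret prob_space law_B by (rule prob_B)
  have ex0: "(\<Sum>j\<in>J. expectation (\<lambda>b. b j * a j)) = 0"
    by (simp add: expect_coord)
  interpret H: Hoeffding_ineq law_B J "\<lambda>j b. b j * a j" "\<lambda>_. -c" "\<lambda>_. c" 0
  proof unfold_locales
    show "finite J" by fact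
    show "indep_vars (\<lambda>_. borel) (\<lambda>j b. b j * a j) J"
      by (rule indep_vars_compose2[OF indepB[OF J(2,1)]]) simp
    fix j assume "j \<in> J"
    have "AE b in law_B. b j \<in> {-1,1}" using AE_B_sign by eventually_elim auto
    then show "AE b in law_B. b j * a j \<in> {-c..c}"
    proof eventually_elim
      case (elim b) then show ?case using a[OF \<open>j \<in> J\<close>] by (auto simp: abs_le_iff)
    qed
  qed (rule eq_reflection, simp add: expect_coord)
  have pos: "(\<Sum>i\<in>J. (c - - c)\<^sup>2) > 0" using J c by (simp add: card_gt_0_iff)
  have "prob {b \<in> space law_B. (\<Sum>j\<in>J. b j * a j) \<le> 0 - x} \<le> exp (- 2 * x\<^sup>2 / (\<Sum>i\<in>J. (c - - c)\<^sup>2))"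
    by (rule H.Hoeffding_ineq_le[OF x pos])
  also have "- 2 * x\<^sup>2 / (\<Sum>i\<in>J. (c - - c)\<^sup>2) = - x\<^sup>2 / (2 * c\<^sup>2 * card J)"
    using J c by (simp add: power2_eq_square field_simps card_gt_0_iff)
  finally show ?thesis by simp
qed

definition stepw :: "(nat \<Rightarrow> int) \<Rightarrow> nat \<Rightarrow> int" where
  "stepw s i = (\<Sum>j<i. s j)"

definition steps :: "nat \<Rightarrow> (nat \<Rightarrow> int) set" where
  "steps m = {..<m} \<rightarrow>\<^sub>E {-1,0,1}"

definition Sset :: "nat \<Rightarrow> int \<Rightarrow> (nat \<Rightarrow> int) set" where
  "Sset m k = {s \<in> steps m. stepw s m = k}"

lemma finite_steps: "finite (steps m)" by (simp add: steps_def finite_PiE)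

lemma finite_Sset: "finite (Sset m k)"
  unfolding Sset_def using finite_steps by simp

lemma min_action_in_Sset:
  assumes "\<bar>k\<bar> \<le> int m"
  shows "\<exists>s\<in>Sset m k. action b f (stepw s) m = min_action b f m k"
proof -
  obtain \<gamma> where g: "lazy_walk \<gamma> m" "\<gamma> 0 = 0" "\<gamma> m = k" "min_action b f m k = action b f \<gamma> m"
    using min_action_attained[OF assms] by blast
  define s where "s = restrict (\<lambda>j. \<gamma> (Suc j) - \<gamma> j) {..<m}"
  have sS: "s \<in> steps m" unfolding steps_def s_def using g(1) unfolding lazy_walk_def by (auto simp: abs_le_iff)
  have w: "stepw s i = \<gamma> i" if "i \<le> m" for i
  proof -
    have "stepw s i = (\<Sum>j<i. \<gamma> (Suc j) - \<gamma> j)" unfolding stepw_def s_def using that by (intro sum.cong) auto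
    also have "\<dots> = \<gamma> i - \<gamma> 0" by (rule sum_lessThan_telescope)
    finally show ?thesis using g(2) by simp
  qed
  have "action b f (stepw s) m = action b f \<gamma> m" unfolding action_def using w by (intro sum.cong) auto
  moreover have "s \<in> Sset m k" using sS w[of m] g(3) by (simp add: Sset_def)
  ultimately show ?thesis using g(4) by auto
qed

lemma card_Sset_bound:
  fixes l :: real
  assumes l: "0 < l" "l \<le> 1" and k: "k \<le> int m"
  shows "real (card (Sset m k)) * l ^ nat (int m - k) \<le> (1 + 2 * l) ^ m"
proof -
  define w where "w v = (if v = (1::int) then 1 else l)" for v
  have "(1 + 2 * l) ^ m = (\<Prod>j\<in>{..<m}. (\<Sum>v\<in>{-1,0,1::int}. w v))"
    by (simp add: w_def add.commute)
  also have "\<dots> = (\<Sum>s\<in>steps m. \<Prod>j\<in>{..<m}. w (s j))"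
    unfolding steps_def by (rule prod_sum_PiE) auto
  finally have eq: "(1 + 2 * l) ^ m = (\<Sum>s\<in>steps m. \<Prod>j\<in>{..<m}. w (s j))" .
  have wpos: "w v \<ge> 0" for v using l by (simp add: w_def)
  have low: "l ^ nat (int m - k) \<le> (\<Prod>j\<in>{..<m}. w (s j))" if s: "s \<in> Sset m k" for s
  proof -
    have sv: "s j \<in> {-1,0,1}" if "j < m" for j using s that by (auto simp: Sset_def steps_def)
    have "int (\<Sum>j<m. nat (1 - s j)) = (\<Sum>j<m. 1 - s j)"
      unfolding of_nat_sum
    proof (intro sum.cong refl)
      fix j assume "j \<in> {..<m}"
      then have "s j \<in> {-1,0,1}" using sv by auto
      then show "int (nat (1 - s j)) = 1 - s j" by auto
    qed
    also have "\<dots> = int m - k" using s by (simp add: Sset_def stepw_def sum_subtractf)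
    finally have "(\<Sum>j<m. nat (1 - s j)) = nat (int m - k)" by linarith
    then have "l ^ nat (int m - k) = (\<Prod>j\<in>{..<m}. l ^ nat (1 - s j))"
      by (metis power_sum)
    also have "\<dots> \<le> (\<Prod>j\<in>{..<m}. w (s j))"
    proof (rule prod_mono)
      fix j assume "j \<in> {..<m}"
      then have "s j \<in> {-1,0,1}" using sv by auto
      moreover have "l * l \<le> l" using l by (simp add: mult_le_cancel_left1)
      ultimately show "0 \<le> l ^ nat (1 - s j) \<and> l ^ nat (1 - s j) \<le> w (s j)"
        using l by (auto simp: w_def power2_eq_square numeral_2_eq_2)
    qed
    finally show ?thesis .
  qed
  have "real (card (Sset m k)) * l ^ nat (int m - k) = (\<Sum>s\<in>Sset m k. l ^ nat (int m - k))"
    by simp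
  also have "\<dots> \<le> (\<Sum>s\<in>Sset m k. \<Prod>j\<in>{..<m}. w (s j))"
    by (rule sum_mono) (rule low)
  also have "\<dots> \<le> (\<Sum>s\<in>steps m. \<Prod>j\<in>{..<m}. w (s j))"
    by (rule sum_mono2) (auto simp: finite_steps Sset_def intro: prod_nonneg wpos)
  finally show ?thesis using eq by simp
qed

definition Uset :: "(int \<Rightarrow> real) \<Rightarrow> nat \<Rightarrow> int \<Rightarrow> real \<Rightarrow> (int \<Rightarrow> real) set" where
  "Uset f m k y = (\<Union>s\<in>Sset m k. {b \<in> space law_B. action b f (stepw s) m \<le> y})"

lemma Uset_sets [measurable]: "Uset f m k y \<in> sets law_B"
  unfolding Uset_def action_def
  by (intro sets.finite_UN finite_Sset ballI) measurable

lemma Uset_mem: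
  assumes "b \<in> space law_B" "\<bar>k\<bar> \<le> int m" "min_action b f m k \<le> y"
  shows "b \<in> Uset f m k y"
  using min_action_in_Sset[OF assms(2), of b f] assms unfolding Uset_def by force

lemma prob_action_le:
  assumes f: "\<And>x. \<bar>f x\<bar> \<le> c" and c: "c > 0" and m: "m \<ge> 1" and x: "x \<ge> 0"
  shows "measure law_B {b \<in> space law_B. action b f \<gamma> m \<le> - x} \<le> exp (- x\<^sup>2 / (2 * c\<^sup>2 * m))"
proof -
  define a where "a j = f (\<gamma> (nat j))" for j
  have eq: "action b f \<gamma> m = (\<Sum>j\<in>{1..int m}. b j * a j)" for b
  proof -
    have "{1..int m} = int ` {1..m}" by (simp add: image_int_atLeastAtMost)
    then show ?thesis unfolding action_def a_def
      by (simp add: sum.reindex)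
  qed
  have "measure law_B {b \<in> space law_B. (\<Sum>j\<in>{1..int m}. b j * a j) \<le> -x} \<le> exp (- x\<^sup>2 / (2 * c\<^sup>2 * card {1..int m}))"
    by (rule hoeffB) (use m c x f in \<open>auto simp: a_def\<close>)
  then show ?thesis by (simp add: eq)
qed

lemma prob_Uset:
  assumes f: "\<And>x. \<bar>f x\<bar> \<le> c" and c: "c > 0" and m: "m \<ge> 1" and x: "x \<ge> 0"
    and l: "0 < l" "l \<le> 1" and k: "k \<le> int m"
  shows "measure law_B (Uset f m k (-x)) * l ^ nat (int m - k) \<le> (1 + 2 * l) ^ m * exp (- x\<^sup>2 / (2 * c\<^sup>2 * m))"
proof -
  interpret prob_space law_B by (rule prob_B)
  have "measure law_B (Uset f m k (-x)) \<le> (\<Sum>s\<in>Sset m k. measure law_B {b \<in> space law_B. action b f (stepw s) m \<le> -x})"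
    unfolding Uset_def
    by (rule finite_measure_subadditive_finite) (auto simp: finite_Sset action_def)
  also have "\<dots> \<le> (\<Sum>s\<in>Sset m k. exp (- x\<^sup>2 / (2 * c\<^sup>2 * m)))"
    by (intro sum_mono prob_action_le[OF f c m x])
  also have "\<dots> = real (card (Sset m k)) * exp (- x\<^sup>2 / (2 * c\<^sup>2 * m))" by simp
  finally have "measure law_B (Uset f m k (-x)) * l ^ nat (int m - k) \<le>
      real (card (Sset m k)) * l ^ nat (int m - k) * exp (- x\<^sup>2 / (2 * c\<^sup>2 * m))"
    using l by (simp add: mult_right_mono mult.commute mult.left_commute)
  also have "\<dots> \<le> (1 + 2 * l) ^ m * exp (- x\<^sup>2 / (2 * c\<^sup>2 * m))"
    by (rule mult_right_mono[OF card_Sset_bound[OF l k]]) simp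
  finally show ?thesis .
qed

lemma round0_facts:
  assumes "0 \<le> \<alpha>" "\<alpha> \<le> 1"
  shows "0 \<le> round0 (\<alpha> * real M)" "round0 (\<alpha> * real M) \<le> int M"
    "real_of_int (round0 (\<alpha> * real M)) > \<alpha> * real M - 1"
proof -
  have nn: "\<alpha> * real M \<ge> 0" using assms by simp
  have le: "\<alpha> * real M \<le> real M" using assms by (simp add: mult_left_le_one_le)
  have r: "round0 (\<alpha> * real M) = \<lfloor>\<alpha> * real M\<rfloor>" using nn by (simp add: round0_def)
  show "0 \<le> round0 (\<alpha> * real M)" unfolding r using nn by simp
  show "round0 (\<alpha> * real M) \<le> int M" unfolding r using le by (simp add: floor_le_iff)
  show "real_of_int (round0 (\<alpha> * real M)) > \<alpha> * real M - 1" unfolding r by linarith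
qed

lemma U_bound:
  assumes f: "\<And>x. \<bar>f x\<bar> \<le> c" and c: "c > 0" and d: "\<delta> > 0" "\<delta> \<le> c"
    and a: "0 < \<alpha>" "\<alpha> \<le> 1"
    and key: "(1 - \<alpha>) * ln (8 * c\<^sup>2 / \<delta>\<^sup>2) \<le> \<delta>\<^sup>2 / (8 * c\<^sup>2)"
    and M: "M \<ge> 1"
  shows "measure law_B (Uset f M (round0 (\<alpha> * real M)) (- (\<delta> * real M)))
           \<le> exp (ln (8 * c\<^sup>2 / \<delta>\<^sup>2)) * exp (- (\<delta>\<^sup>2 / (8 * c\<^sup>2))) ^ M"
proof -
  define l where "l = \<delta>\<^sup>2 / (8 * c\<^sup>2)"
  define L where "L = ln (8 * c\<^sup>2 / \<delta>\<^sup>2)"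
  define k where "k = round0 (\<alpha> * real M)"
  define K where "K = nat (int M - k)"
  define P where "P = measure law_B (Uset f M k (- (\<delta> * real M)))"
  have l0: "0 < l" using d c by (simp add: l_def)
  have "\<delta>\<^sup>2 \<le> c\<^sup>2" using d by (intro power_mono) auto
  moreover have "0 < c\<^sup>2" using c by simp
  ultimately have "\<delta>\<^sup>2 \<le> 8 * c\<^sup>2" by linarith
  then have l1: "l \<le> 1" using \<open>0 < c\<^sup>2\<close> by (simp add: l_def divide_le_eq_1)
  have lL: "l = exp (- L)" using d c by (simp add: l_def L_def exp_minus exp_ln field_simps)
  have kM: "k \<le> int M" "0 \<le> k" "real_of_int k > \<alpha> * real M - 1"
    using round0_facts[of \<alpha> M] a by (auto simp: k_def)
  have Kle: "real K \<le> (1 - \<alpha>) * real M + 1" using kM by (simp add: K_def algebra_simps)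
  have L0: "L \<ge> 0"
  proof -
    have "1 \<le> 8 * c\<^sup>2 / \<delta>\<^sup>2" using \<open>\<delta>\<^sup>2 \<le> 8 * c\<^sup>2\<close> d by (simp add: field_simps)
    then show ?thesis by (simp add: L_def)
  qed
  have xx: "(\<delta> * real M)\<^sup>2 / (2 * c\<^sup>2 * real M) = 4 * l * real M"
    using M c by (simp add: l_def power2_eq_square field_simps)
  have base: "P * l ^ K \<le> (1 + 2 * l) ^ M * exp (- (4 * l * real M))"
    using prob_Uset[OF f c M _ l0 l1 kM(1), of "\<delta> * real M"] d xx
    by (simp add: P_def K_def)
  have "(1 + 2 * l) ^ M \<le> exp (2 * l) ^ M"
    using l0 exp_ge_add_one_self[of "2 * l"] by (intro power_mono) auto
  also have "\<dots> = exp (real M * (2 * l))" by (simp add: exp_of_nat_mult)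
  finally have "P * l ^ K \<le> exp (real M * (2 * l)) * exp (- (4 * l * real M))"
    using base by (smt (verit) exp_gt_zero mult_right_mono)
  also have "\<dots> = exp (- (2 * l * real M))" by (simp add: exp_add[symmetric] algebra_simps)
  finally have b1: "P * l ^ K \<le> exp (- (2 * l * real M))" .
  have lK: "l ^ K = exp (- (L * real K))" using lL by (simp add: exp_of_nat_mult[symmetric] algebra_simps)
  have "L * real K \<le> L * ((1 - \<alpha>) * real M + 1)" using Kle L0 by (rule mult_left_mono)
  have "P \<le> exp (- (2 * l * real M)) / l ^ K"
    using b1 l0 by (simp add: pos_le_divide_eq)
  also have "\<dots> = exp (- (2 * l * real M) + L * real K)"
    unfolding lK by (simp add: exp_diff exp_minus field_simps exp_add)
  also have "\<dots> \<le> exp (L - l * real M)"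
  proof -
    have "(1 - \<alpha>) * L \<le> l" using key by (simp add: L_def l_def mult.commute)
    then have "(1 - \<alpha>) * L * real M \<le> l * real M" by (intro mult_right_mono) auto
    then show ?thesis using \<open>L * real K \<le> L * ((1 - \<alpha>) * real M + 1)\<close>
      by (simp add: algebra_simps)
  qed
  also have "\<dots> = exp L * exp (- l) ^ M"
    by (simp add: exp_diff exp_minus exp_of_nat_mult[symmetric] field_simps)
  finally show ?thesis by (simp add: P_def k_def L_def l_def)
qed

lemma PB_contra:
  assumes f: "\<And>x. \<bar>f x\<bar> \<le> c" and c: "c > 0" and d: "\<delta> > 0" "\<delta> \<le> c"
    and a: "0 < \<alpha>" "\<alpha> \<le> 1"
    and key: "(1 - \<alpha>) * ln (8 * c\<^sup>2 / \<delta>\<^sup>2) \<le> \<delta>\<^sup>2 / (8 * c\<^sup>2)"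
  shows "\<not> (AE b in law_B. eventually (\<lambda>M. min_action b f M (round0 (\<alpha> * real M)) \<le> - (\<delta> * real M)) sequentially)"
proof
  assume H: "AE b in law_B. eventually (\<lambda>M. min_action b f M (round0 (\<alpha> * real M)) \<le> - (\<delta> * real M)) sequentially"
  interpret prob_space law_B by (rule prob_B)
  define U where "U M = Uset f M (round0 (\<alpha> * real M)) (- (\<delta> * real M))" for M
  define V where "V N = space law_B \<inter> (\<Inter>M\<in>{Suc N..}. U M)" for N
  have Us: "U M \<in> sets law_B" for M unfolding U_def by (rule Uset_sets)
  have Vs: "V N \<in> sets law_B" for N
    unfolding V_def by (intro sets.Int sets.top sets.countable_INT') (auto simp: Us)
  have inc: "incseq V" unfolding incseq_def V_def by auto
  have AEV: "AE b in law_B. b \<in> (\<Union>N. V N)"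
    using H AE_space
  proof eventually_elim
    case (elim b)
    then obtain N where N: "\<And>M. M \<ge> N \<Longrightarrow> min_action b f M (round0 (\<alpha> * real M)) \<le> - (\<delta> * real M)"
      by (auto simp: eventually_sequentially)
    have "b \<in> U M" if "M \<ge> Suc N" for M
      unfolding U_def
      by (rule Uset_mem) (use elim N that round0_facts[of \<alpha> M] a in auto)
    then have "b \<in> V N" using elim by (auto simp: V_def)
    then show ?case by auto
  qed
  have "prob (\<Union>N. V N) = 1"
    using AEV by (subst (asm) AE_in_set_eq_1) (auto intro: Vs)
  moreover have "(\<lambda>N. prob (V N)) \<longlonglongrightarrow> prob (\<Union>N. V N)"
    by (rule finite_Lim_measure_incseq) (auto simp: Vs inc)
  ultimately have lim1: "(\<lambda>N. prob (V N)) \<longlonglongrightarrow> 1" by simp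
  define q where "q = exp (- (\<delta>\<^sup>2 / (8 * c\<^sup>2)))"
  have q: "norm q < 1" using d c by (simp add: q_def)
  have lim0: "(\<lambda>N. exp (ln (8 * c\<^sup>2 / \<delta>\<^sup>2)) * q ^ Suc N) \<longlonglongrightarrow> 0"
    by (intro tendsto_mult_right_zero LIMSEQ_Suc LIMSEQ_power_zero q)
  have le: "prob (V N) \<le> exp (ln (8 * c\<^sup>2 / \<delta>\<^sup>2)) * q ^ Suc N" for N
  proof -
    have "prob (V N) \<le> prob (U (Suc N))"
      by (rule finite_measure_mono) (auto simp: V_def Us)
    also have "\<dots> \<le> exp (ln (8 * c\<^sup>2 / \<delta>\<^sup>2)) * q ^ Suc N"
      unfolding U_def q_def by (rule U_bound[OF f c d a key]) simp
    finally show ?thesis .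
  qed
  have "(1::real) \<le> 0" by (rule LIMSEQ_le[OF lim1 lim0]) (use le in auto)
  then show False by simp
qed

lemma round0_abs_near: "\<bar>real_of_int (round0 x)\<bar> \<le> \<bar>x\<bar> \<and> \<bar>real_of_int (round0 x) - x\<bar> \<le> 1"
proof (cases "x \<ge> 0")
  case True
  have "real_of_int \<lfloor>x\<rfloor> \<le> x" "x < real_of_int \<lfloor>x\<rfloor> + 1" "0 \<le> \<lfloor>x\<rfloor>"
    using True floor_correct[of x] by auto
  moreover have r: "round0 x = \<lfloor>x\<rfloor>" using True by (simp add: round0_def)
  ultimately show ?thesis unfolding r abs_le_iff using True by (intro conjI) linarith+
next
  case False
  have "x \<le> real_of_int \<lceil>x\<rceil>" "real_of_int \<lceil>x\<rceil> - 1 < x" "\<lceil>x\<rceil> \<le> 0"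
    using False ceiling_correct[of x] by (auto simp: ceiling_le_iff)
  moreover have r: "round0 x = \<lceil>x\<rceil>" using False by (simp add: round0_def)
  ultimately show ?thesis unfolding r abs_le_iff using False by (intro conjI) linarith+
qed

lemma round0_abs: "\<bar>real_of_int (round0 x)\<bar> \<le> \<bar>x\<bar>"
  using round0_abs_near by blast

lemma round0_near: "\<bar>real_of_int (round0 x) - x\<bar> \<le> 1"
  using round0_abs_near by blast

lemma AE_exists:
  assumes "prob_space M" "AE x in M. P x"
  shows "\<exists>x. P x"
proof (rule ccontr)
  assume "\<not> (\<exists>x. P x)"
  then have "AE x in M. False" using assms(2) by (rule_tac eventually_mono) auto
  then show False using prob_space.AE_False[OF assms(1)] by simp
qed

lemma scaled_conv:
  fixes g :: "nat \<Rightarrow> real"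
  assumes g: "(\<lambda>M. g M / real M) \<longlonglongrightarrow> L" and x: "x > 0"
  shows "(\<lambda>n. g (nat \<lceil>x * real n\<rceil>) / real n) \<longlonglongrightarrow> L * x"
proof -
  define m where "m n = nat \<lceil>x * real n\<rceil>" for n :: nat
  have mge: "real (m n) \<ge> x * real n" for n
  proof -
    have "0 \<le> x * real n" using x by simp
    then have "0 \<le> \<lceil>x * real n\<rceil>" by simp
    then have "real (m n) = real_of_int \<lceil>x * real n\<rceil>" unfolding m_def by simp
    then show ?thesis using ceiling_correct[of "x * real n"] by linarith
  qed
  have mle: "real (m n) \<le> x * real n + 1" for n
  proof -
    have "0 \<le> x * real n" using x by simp
    then have "0 \<le> \<lceil>x * real n\<rceil>" by simp
    then have "real (m n) = real_of_int \<lceil>x * real n\<rceil>" unfolding m_def by simp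
    then show ?thesis using ceiling_correct[of "x * real n"] by linarith
  qed
  have fm: "filterlim m sequentially sequentially"
  proof (subst filterlim_at_top, intro allI)
    fix Z :: nat
    have "eventually (\<lambda>n. real n \<ge> real Z / x) sequentially" by real_asymp
    then show "eventually (\<lambda>n. Z \<le> m n) sequentially"
    proof eventually_elim
      case (elim n)
      have "real Z \<le> x * real n" using elim x by (simp add: field_simps)
      then have "\<lceil>real Z\<rceil> \<le> \<lceil>x * real n\<rceil>" by (rule ceiling_mono)
      then have "int Z \<le> \<lceil>x * real n\<rceil>" by simp
      then show ?case unfolding m_def by (metis nat_int nat_mono)
    qed
  qed
  have A: "(\<lambda>n. g (m n) / real (m n)) \<longlonglongrightarrow> L"
    using filterlim_compose[OF g fm] by (simp add: o_def)
  have B: "(\<lambda>n. real (m n) / real n) \<longlonglongrightarrow> x"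
  proof (rule tendsto_sandwich[of "\<lambda>n. x" _ _ "\<lambda>n. x + 1 / real n"])
    show "eventually (\<lambda>n. x \<le> real (m n) / real n) sequentially"
      using eventually_gt_at_top[of 0] by eventually_elim (use mge in \<open>auto simp: field_simps\<close>)
    show "eventually (\<lambda>n. real (m n) / real n \<le> x + 1 / real n) sequentially"
      using eventually_gt_at_top[of 0] by eventually_elim (use mle in \<open>auto simp: field_simps\<close>)
    show "(\<lambda>n. x + 1 / real n) \<longlonglongrightarrow> x" by real_asymp
  qed simp
  have "(\<lambda>n. g (m n) / real (m n) * (real (m n) / real n)) \<longlonglongrightarrow> L * x"
    by (rule tendsto_mult[OF A B])
  moreover have "eventually (\<lambda>n. g (m n) / real (m n) * (real (m n) / real n) = g (m n) / real n) sequentially"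
    using eventually_gt_at_top[of 0]
  proof eventually_elim
    case (elim n)
    then have "real (m n) > 0" using mge x by (smt (verit) of_nat_0_less_iff mult_pos_pos)
    then show ?case by simp
  qed
  ultimately show ?thesis unfolding m_def by (rule Lim_transform_eventually)
qed

locale S =
  fixes c :: real and \<rho> \<Lambda> :: "real \<Rightarrow> real"
  assumes c_pos: "c > 0"
    and dens: "(\<rho> has_integral 1) UNIV"
    and cont: "continuous_on {-c<..<c} \<rho>"
    and pos: "\<And>x. x \<in> {-c<..<c} \<Longrightarrow> \<rho> x > 0"
    and zero: "\<And>x. x \<notin> {-c<..<c} \<Longrightarrow> \<rho> x = 0"
    and shape: "is_shape_function \<rho> \<Lambda>"
begin

lemma rho_meas: "\<rho> \<in> borel_measurable borel"
proof -
  have "\<rho> = (\<lambda>x. indicator {-c<..<c} x *\<^sub>R \<rho> x)"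
  proof (rule ext)
    fix x show "\<rho> x = indicator {-c<..<c} x *\<^sub>R \<rho> x"
      by (cases "x \<in> {-c<..<c}") (auto simp: zero)
  qed
  also have "\<dots> \<in> borel_measurable borel"
    by (rule borel_measurable_continuous_on_indicator[OF _ cont]) simp
  finally show ?thesis .
qed

lemma rho_nn: "\<rho> x \<ge> 0"
  using pos[of x] zero[of x] by (cases "x \<in> {-c<..<c}") auto

lemma prob_dens: "prob_space (density lborel (\<lambda>x. ennreal (\<rho> x)))"
proof (rule prob_spaceI)
  have m: "(\<lambda>x. ennreal (\<rho> x)) \<in> borel_measurable lborel" using rho_meas by simp
  have "emeasure (density lborel (\<lambda>x. ennreal (\<rho> x))) UNIV = (\<integral>\<^sup>+ x. ennreal (\<rho> x) \<partial>lborel)"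
    by (subst emeasure_density[OF m]) (auto simp: nn_integral_set_ennreal)
  also have "\<dots> = 1"
    using nn_integral_has_integral_lborel[OF rho_meas rho_nn dens] by simp
  finally show "emeasure (density lborel (\<lambda>x. ennreal (\<rho> x))) (space (density lborel (\<lambda>x. ennreal (\<rho> x)))) = 1"
    by simp
qed

lemma law_F_eq: "law_F \<rho> = PiM UNIV (\<lambda>_::int. density lborel (\<lambda>x. ennreal (\<rho> x)))"
  unfolding law_F_def by simp

lemma prob_F: "prob_space (law_F \<rho>)"
  unfolding law_F_eq by (rule prob_space_PiM) (rule prob_dens)

lemma AE_F: "AE f in law_F \<rho>. \<forall>x. \<bar>f x\<bar> \<le> c"
proof -
  have m: "(\<lambda>x. ennreal (\<rho> x)) \<in> borel_measurable lborel" using rho_meas by simp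
  have D: "AE y in density lborel (\<lambda>x. ennreal (\<rho> x)). \<bar>y\<bar> \<le> c"
  proof (subst AE_density[OF m], rule AE_I2, intro impI)
    fix y assume "0 < ennreal (\<rho> y)"
    then have "\<rho> y \<noteq> 0" by auto
    then have "y \<in> {-c<..<c}" using zero by blast
    then show "\<bar>y\<bar> \<le> c" by auto
  qed
  have "AE f in law_F \<rho>. \<bar>f x\<bar> \<le> c" for x
    unfolding law_F_eq
    using AE_PiM_component[of UNIV "\<lambda>_. density lborel (\<lambda>x. ennreal (\<rho> x))" x "\<lambda>y. \<bar>y\<bar> \<le> c"] prob_dens D
    by simp
  then show ?thesis by (subst AE_ball_countable[where X=UNIV, simplified]) auto
qed

lemma pairFB: "pair_sigma_finite (law_F \<rho>) law_B"
proof -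
  interpret F: prob_space "law_F \<rho>" by (rule prob_F)
  interpret B: prob_space law_B by (rule prob_B)
  interpret pair_prob_space "law_F \<rho>" law_B ..
  show ?thesis by unfold_locales
qed

definition conv :: "real \<Rightarrow> (int \<Rightarrow> real) \<Rightarrow> (int \<Rightarrow> real) \<Rightarrow> bool" where
  "conv \<alpha> f b \<longleftrightarrow> (\<lambda>n. min_action b f n (round0 (\<alpha> * real n)) / real n) \<longlonglongrightarrow> - \<Lambda> \<alpha>"

definition good :: "real set \<Rightarrow> (int \<Rightarrow> real) \<Rightarrow> (int \<Rightarrow> real) \<Rightarrow> bool" where
  "good A f b \<longleftrightarrow> (\<forall>x. \<bar>f x\<bar> \<le> c) \<and> (\<forall>i. \<bar>b i\<bar> \<le> 1) \<and> (\<forall>\<alpha>\<in>A. conv \<alpha> f b)"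

lemma AE_conv:
  assumes a: "\<alpha> \<in> {-1..1}"
  shows "AE f in law_F \<rho>. AE b in law_B. conv \<alpha> f b"
proof -
  have "AE \<omega> in (law_F \<rho> \<Otimes>\<^sub>M law_B).
        (\<lambda>n. min_action (snd \<omega>) (fst \<omega>) n (round0 (\<alpha> * real n)) / real n) \<longlonglongrightarrow> - \<Lambda> \<alpha>"
    using shape a unfolding is_shape_function_def by blast
  then have "AE f in law_F \<rho>. AE b in law_B.
        (\<lambda>n. min_action (snd (f, b)) (fst (f, b)) n (round0 (\<alpha> * real n)) / real n) \<longlonglongrightarrow> - \<Lambda> \<alpha>"
    by (rule pair_sigma_finite.AE_pair[OF pairFB])
  then show ?thesis by (simp add: conv_def)
qed

lemma AE_good:
  assumes "countable A" "A \<subseteq> {-1..1}"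
  shows "AE f in law_F \<rho>. AE b in law_B. good A f b"
proof -
  have "AE f in law_F \<rho>. \<forall>\<alpha>\<in>A. AE b in law_B. conv \<alpha> f b"
    using assms AE_conv by (subst AE_ball_countable) auto
  then have "AE f in law_F \<rho>. AE b in law_B. \<forall>\<alpha>\<in>A. conv \<alpha> f b"
    by eventually_elim (subst AE_ball_countable[OF assms(1)], simp)
  then show ?thesis using AE_F
  proof eventually_elim
    case (elim f)
    from elim(1) AE_B_abs show ?case
      by eventually_elim (use elim(2) in \<open>auto simp: good_def\<close>)
  qed
qed

lemma exists_good:
  assumes "countable A" "A \<subseteq> {-1..1}"
  shows "\<exists>f b. good A f b"
proof -
  obtain f where "AE b in law_B. good A f b"
    using AE_exists[OF prob_F AE_good[OF assms]] by blast
  then show ?thesis using AE_exists[OF prob_B] by blast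
qed

lemma Lam_bound:
  assumes "\<alpha> \<in> {-1..1}"
  shows "\<bar>\<Lambda> \<alpha>\<bar> \<le> c"
proof -
  obtain f b where g: "good {\<alpha>} f b" using exists_good[of "{\<alpha>}"] assms by auto
  then have cv: "(\<lambda>n. \<bar>min_action b f n (round0 (\<alpha> * real n)) / real n\<bar>) \<longlonglongrightarrow> \<bar>- \<Lambda> \<alpha>\<bar>"
    by (intro tendsto_rabs) (simp add: good_def conv_def)
  have "eventually (\<lambda>n. \<bar>min_action b f n (round0 (\<alpha> * real n)) / real n\<bar> \<le> c) sequentially"
    using eventually_gt_at_top[of 0]
  proof eventually_elim
    case (elim n)
    have "\<bar>real_of_int (round0 (\<alpha> * real n))\<bar> \<le> \<bar>\<alpha> * real n\<bar>" by (rule round0_abs)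
    also have "\<dots> \<le> real n" using assms by (auto simp: abs_mult mult_left_le_one_le)
    finally have "\<bar>round0 (\<alpha> * real n)\<bar> \<le> int n" by linarith
    then have "\<bar>min_action b f n (round0 (\<alpha> * real n))\<bar> \<le> c * real n"
      by (rule min_action_bound[rotated 2]) (use g in \<open>auto simp: good_def\<close>)
    then show ?case using elim by (simp add: divide_le_eq)
  qed
  from tendsto_upperbound[OF cv this] show ?thesis by simp
qed

end

lemma diag_walk:
  assumes lw: "lazy_walk \<gamma> M" and g0: "\<gamma> 0 = 0" and gM: "\<gamma> M = int M"
  shows "\<forall>i\<le>M. \<gamma> i = int i"
proof -
  have step: "\<gamma> j - \<gamma> i \<le> int j - int i" if "i \<le> j" "j \<le> M" for i j
    using that
  proof (induction j)
    case 0 then show ?case by simp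
  next
    case (Suc j)
    show ?case
    proof (cases "i = Suc j")
      case True then show ?thesis by simp
    next
      case False
      then have "i \<le> j" using Suc by simp
      then have "\<gamma> j - \<gamma> i \<le> int j - int i" using Suc by simp
      moreover have "\<bar>\<gamma> (Suc j) - \<gamma> j\<bar> \<le> 1" using lw Suc(3) unfolding lazy_walk_def by auto
      ultimately show ?thesis by simp
    qed
  qed
  show ?thesis
  proof (intro allI impI)
    fix i assume i: "i \<le> M"
    have "\<gamma> i - \<gamma> 0 \<le> int i - 0" using step[of 0 i] i by simp
    moreover have "\<gamma> M - \<gamma> i \<le> int M - int i" using step[of i M] i by simp
    ultimately show "\<gamma> i = int i" using g0 gM by simp
  qed
qed

lemma min_action_diag:
  "min_action b f M (int M) = (\<Sum>i=1..M. b (int i) * f (int i))"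
proof -
  let ?D = "(\<Sum>i=1..M. b (int i) * f (int i))"
  have "{action b f \<gamma> M | \<gamma>. lazy_walk \<gamma> M \<and> \<gamma> 0 = 0 \<and> \<gamma> M = int M} = {?D}"
  proof
    show "{action b f \<gamma> M | \<gamma>. lazy_walk \<gamma> M \<and> \<gamma> 0 = 0 \<and> \<gamma> M = int M} \<subseteq> {?D}"
    proof
      fix a assume "a \<in> {action b f \<gamma> M | \<gamma>. lazy_walk \<gamma> M \<and> \<gamma> 0 = 0 \<and> \<gamma> M = int M}"
      then obtain \<gamma> where a: "a = action b f \<gamma> M" and h: "lazy_walk \<gamma> M" "\<gamma> 0 = 0" "\<gamma> M = int M" by auto
      have "\<forall>i\<le>M. \<gamma> i = int i" by (rule diag_walk[OF h])
      then have "action b f \<gamma> M = ?D" unfolding action_def by (intro sum.cong) auto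
      then show "a \<in> {?D}" using a by simp
    qed
    obtain \<gamma> where h: "lazy_walk \<gamma> M" "\<gamma> 0 = 0" "\<gamma> M = int M"
      using walk_exists[of "int M" M] by auto
    have "\<forall>i\<le>M. \<gamma> i = int i" by (rule diag_walk[OF h])
    then have "action b f \<gamma> M = ?D" unfolding action_def by (intro sum.cong) auto
    then show "{?D} \<subseteq> {action b f \<gamma> M | \<gamma>. lazy_walk \<gamma> M \<and> \<gamma> 0 = 0 \<and> \<gamma> M = int M}"
      using h by force
  qed
  then show ?thesis unfolding min_action_def by simp
qed

lemma min_action_meas:
  assumes "\<bar>k\<bar> \<le> int m"
  shows "(\<lambda>b. min_action b f m k) \<in> borel_measurable law_B"
proof -
  have ne: "Sset m k \<noteq> {}" using min_action_in_Sset[OF assms] by blast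
  have eq: "min_action b f m k = (MIN s\<in>Sset m k. action b f (stepw s) m)" for b
  proof (rule antisym)
    obtain s where s: "s \<in> Sset m k" "action b f (stepw s) m = min_action b f m k"
      using min_action_in_Sset[OF assms] by blast
    show "(MIN s\<in>Sset m k. action b f (stepw s) m) \<le> min_action b f m k"
      using s finite_Sset by (metis (no_types, lifting) Min_le finite_imageI image_eqI)
    show "min_action b f m k \<le> (MIN s\<in>Sset m k. action b f (stepw s) m)"
    proof (subst Min_ge_iff)
      show "\<forall>a\<in>(\<lambda>s. action b f (stepw s) m) ` Sset m k. min_action b f m k \<le> a"
      proof
        fix a assume "a \<in> (\<lambda>s. action b f (stepw s) m) ` Sset m k"
        then obtain s where s: "s \<in> Sset m k" and a: "a = action b f (stepw s) m" by auto
        have lw: "lazy_walk (stepw s) m" unfolding lazy_walk_def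
        proof (intro allI impI)
          fix i assume "i < m"
          then have "s i \<in> {-1,0,1}" using s by (auto simp: Sset_def steps_def PiE_iff)
          then show "\<bar>stepw s (Suc i) - stepw s i\<bar> \<le> 1" by (auto simp: stepw_def)
        qed
        show "min_action b f m k \<le> a" unfolding a
          by (rule min_action_le[OF lw]) (use s in \<open>auto simp: Sset_def stepw_def\<close>)
      qed
    qed (use finite_Sset ne in auto)
  qed
  show ?thesis unfolding eq
    by (intro borel_measurable_Min finite_Sset) (simp add: action_def)
qed

context S begin

lemma exists_f:
  assumes "countable A" "A \<subseteq> {-1..1}"
  shows "\<exists>f. (\<forall>x. \<bar>f x\<bar> \<le> c) \<and> (AE b in law_B. good A f b)"
proof -
  obtain f where f: "AE b in law_B. good A f b"
    using AE_exists[OF prob_F AE_good[OF assms]] by blast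
  then obtain b where "good A f b" using AE_exists[OF prob_B] by blast
  then show ?thesis using f by (auto simp: good_def)
qed

lemma CI:
  assumes x: "0 < x" "x < x'" and a: "\<alpha> \<in> {-1..1}" and b: "\<beta> \<in> {-1..1}"
    and cond: "\<bar>\<beta> * x' - \<alpha> * x\<bar> < x' - x"
  shows "x * \<Lambda> \<alpha> - c * (x' - x) \<le> x' * \<Lambda> \<beta>"
proof -
  obtain f b where g: "good {\<alpha>, \<beta>} f b" using exists_good[of "{\<alpha>,\<beta>}"] a b by auto
  have fb: "\<And>y. \<bar>f y\<bar> \<le> c" and bb: "\<And>i. \<bar>b i\<bar> \<le> 1" using g by (auto simp: good_def)
  define m where "m n = nat \<lceil>x * real n\<rceil>" for n :: nat
  define m' where "m' n = nat \<lceil>x' * real n\<rceil>" for n :: nat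
  define k where "k n = round0 (\<alpha> * real (m n))" for n
  define k' where "k' n = round0 (\<beta> * real (m' n))" for n
  have A: "(\<lambda>n. min_action b f (m n) (k n) / real n) \<longlonglongrightarrow> - \<Lambda> \<alpha> * x"
    unfolding m_def k_def
    by (rule scaled_conv[where g="\<lambda>M. min_action b f M (round0 (\<alpha> * real M))"])
       (use g x in \<open>auto simp: good_def conv_def\<close>)
  have B: "(\<lambda>n. min_action b f (m' n) (k' n) / real n) \<longlonglongrightarrow> - \<Lambda> \<beta> * x'"
    unfolding m'_def k'_def
    by (rule scaled_conv[where g="\<lambda>M. min_action b f M (round0 (\<beta> * real M))"])
       (use g x in \<open>auto simp: good_def conv_def\<close>)
  have mb: "x * real n \<le> real (m n) \<and> real (m n) \<le> x * real n + 1" for n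
  proof -
    have "0 \<le> x * real n" using x by simp
    then have "0 \<le> \<lceil>x * real n\<rceil>" by simp
    then have "real (m n) = real_of_int \<lceil>x * real n\<rceil>" unfolding m_def by simp
    then show ?thesis using ceiling_correct[of "x * real n"] by linarith
  qed
  have mb': "x' * real n \<le> real (m' n) \<and> real (m' n) \<le> x' * real n + 1" for n
  proof -
    have "0 \<le> x' * real n" using x by simp
    then have "0 \<le> \<lceil>x' * real n\<rceil>" by simp
    then have "real (m' n) = real_of_int \<lceil>x' * real n\<rceil>" unfolding m'_def by simp
    then show ?thesis using ceiling_correct[of "x' * real n"] by linarith
  qed
  have Dconv: "(\<lambda>n. c * (real (m' n) - real (m n)) / real n) \<longlonglongrightarrow> c * (x' - x)"
  proof -
    have r: "(\<lambda>n. real (m n) / real n) \<longlonglongrightarrow> x" if "\<And>n. y * real n \<le> real (m n) \<and> real (m n) \<le> y * real n + 1"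
       and "y = x" for m :: "nat \<Rightarrow> nat" and y
    proof (rule tendsto_sandwich[of "\<lambda>n. x" _ _ "\<lambda>n. x + 1 / real n"])
      show "eventually (\<lambda>n. x \<le> real (m n) / real n) sequentially"
        using eventually_gt_at_top[of 0] by eventually_elim (use that in \<open>auto simp: field_simps\<close>)
      show "eventually (\<lambda>n. real (m n) / real n \<le> x + 1 / real n) sequentially"
        using eventually_gt_at_top[of 0] by eventually_elim (use that in \<open>auto simp: field_simps\<close>)
      show "(\<lambda>n. x + 1 / real n) \<longlonglongrightarrow> x" by real_asymp
    qed simp
    have r': "(\<lambda>n. real (m' n) / real n) \<longlonglongrightarrow> x'"
    proof (rule tendsto_sandwich[of "\<lambda>n. x'" _ _ "\<lambda>n. x' + 1 / real n"])
      show "eventually (\<lambda>n. x' \<le> real (m' n) / real n) sequentially"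
        using eventually_gt_at_top[of 0] by eventually_elim (use mb' in \<open>auto simp: field_simps\<close>)
      show "eventually (\<lambda>n. real (m' n) / real n \<le> x' + 1 / real n) sequentially"
        using eventually_gt_at_top[of 0] by eventually_elim (use mb' in \<open>auto simp: field_simps\<close>)
      show "(\<lambda>n. x' + 1 / real n) \<longlonglongrightarrow> x'" by real_asymp
    qed simp
    have "(\<lambda>n. c * (real (m' n) / real n - real (m n) / real n)) \<longlonglongrightarrow> c * (x' - x)"
      by (intro tendsto_intros r' r[OF mb refl])
    moreover have "(\<lambda>n. c * (real (m' n) / real n - real (m n) / real n)) = (\<lambda>n. c * (real (m' n) - real (m n)) / real n)"
      by (rule ext) (simp add: diff_divide_distrib[symmetric])
    ultimately show ?thesis by simp
  qed
  define gap where "gap = (x' - x) - \<bar>\<beta> * x' - \<alpha> * x\<bar>"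
  have gap: "gap > 0" using cond by (simp add: gap_def)
  have ev: "eventually (\<lambda>n. min_action b f (m' n) (k' n) / real n \<le>
      min_action b f (m n) (k n) / real n + c * (real (m' n) - real (m n)) / real n) sequentially"
    using eventually_ge_at_top[of "nat \<lceil>5 / gap\<rceil> + 1"]
  proof eventually_elim
    case (elim n)
    define N where "N = real n"
    have N: "N \<ge> 5 / gap" "N > 0" using elim unfolding N_def by linarith+
    have N5: "gap * N \<ge> 5" using N gap by (simp add: field_simps)
    define Mm where "Mm = real (m n)"
    define Mm' where "Mm' = real (m' n)"
    define K where "K = real_of_int (k n)"
    define K' where "K' = real_of_int (k' n)"
    have F1: "x * N \<le> Mm" "Mm \<le> x * N + 1" using mb[of n] by (auto simp: N_def Mm_def)
    have F2: "x' * N \<le> Mm'" "Mm' \<le> x' * N + 1" using mb'[of n] by (auto simp: N_def Mm'_def)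
    have F3: "\<bar>K - \<alpha> * Mm\<bar> \<le> 1" unfolding K_def k_def Mm_def by (rule round0_near)
    have F4: "\<bar>K' - \<beta> * Mm'\<bar> \<le> 1" unfolding K'_def k'_def Mm'_def by (rule round0_near)
    have F5: "\<bar>\<beta> * Mm' - \<beta> * (x' * N)\<bar> \<le> 1"
    proof -
      have "\<bar>\<beta> * Mm' - \<beta> * (x' * N)\<bar> = \<bar>\<beta>\<bar> * \<bar>Mm' - x' * N\<bar>" by (simp add: abs_mult[symmetric] algebra_simps)
      also have "\<dots> \<le> 1 * 1" using b F2 by (intro mult_mono) auto
      finally show ?thesis by simp
    qed
    have F6: "\<bar>\<alpha> * Mm - \<alpha> * (x * N)\<bar> \<le> 1"
    proof -
      have "\<bar>\<alpha> * Mm - \<alpha> * (x * N)\<bar> = \<bar>\<alpha>\<bar> * \<bar>Mm - x * N\<bar>" by (simp add: abs_mult[symmetric] algebra_simps)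
      also have "\<dots> \<le> 1 * 1" using a F1 by (intro mult_mono) auto
      finally show ?thesis by simp
    qed
    have F7: "\<bar>\<beta> * (x' * N) - \<alpha> * (x * N)\<bar> \<le> x' * N - x * N - 5"
    proof -
      have "\<beta> * (x' * N) - \<alpha> * (x * N) = (\<beta> * x' - \<alpha> * x) * N" by (simp add: algebra_simps)
      then have "\<bar>\<beta> * (x' * N) - \<alpha> * (x * N)\<bar> = \<bar>\<beta> * x' - \<alpha> * x\<bar> * N"
        using N by (simp add: abs_mult)
      also have "\<dots> = (x' - x) * N - gap * N" by (simp add: gap_def algebra_simps)
      finally show ?thesis using N5 by (simp add: algebra_simps)
    qed
    define A1 where "A1 = K' - \<beta> * Mm'"
    define A2 where "A2 = \<beta> * Mm' - \<beta> * (x' * N)"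
    define A3 where "A3 = \<beta> * (x' * N) - \<alpha> * (x * N)"
    define A4 where "A4 = \<alpha> * Mm - \<alpha> * (x * N)"
    define A5 where "A5 = K - \<alpha> * Mm"
    have eqK: "K' - K = A1 + A2 + A3 - A4 - A5" by (simp add: A1_def A2_def A3_def A4_def A5_def)
    have B: "\<bar>A1\<bar> \<le> 1" "\<bar>A2\<bar> \<le> 1" "\<bar>A3\<bar> \<le> x' * N - x * N - 5" "\<bar>A4\<bar> \<le> 1" "\<bar>A5\<bar> \<le> 1"
      using F3 F4 F5 F6 F7 by (simp_all add: A1_def A2_def A3_def A4_def A5_def)
    have diffM: "x' * N - x * N - 1 \<le> Mm' - Mm" using F1(2) F2(1) by linarith
    have kk1: "K' - K \<le> Mm' - Mm"
    proof -
      have "A1 + A2 + A3 - A4 - A5 \<le> 1 + 1 + (x' * N - x * N - 5) + 1 + 1"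
        using B by (simp add: abs_le_iff) 
      then show ?thesis using eqK diffM by linarith
    qed
    have kk2: "K - K' \<le> Mm' - Mm"
    proof -
      have "- (A1 + A2 + A3 - A4 - A5) \<le> 1 + 1 + (x' * N - x * N - 5) + 1 + 1"
        using B by (simp add: abs_le_iff)
      then show ?thesis using eqK diffM by linarith
    qed
    have kk: "\<bar>K' - K\<bar> \<le> Mm' - Mm" using kk1 kk2 by (simp add: abs_le_iff)
    have kk': "\<bar>k' n - k n\<bar> \<le> int (m' n) - int (m n)"
    proof -
      have "real_of_int \<bar>k' n - k n\<bar> \<le> real_of_int (int (m' n) - int (m n))"
        using kk by (simp add: K_def K'_def Mm_def Mm'_def)
      then show ?thesis by (simp only: of_int_le_iff)
    qed
    have mm: "m n \<le> m' n" unfolding m_def m'_def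
      by (intro nat_mono ceiling_mono mult_right_mono) (use x in auto)
    have kle: "\<bar>k n\<bar> \<le> int (m n)"
    proof -
      have "\<bar>K\<bar> \<le> \<bar>\<alpha> * Mm\<bar>" unfolding K_def k_def Mm_def by (rule round0_abs)
      also have "\<dots> \<le> Mm" using a by (auto simp: abs_mult Mm_def mult_left_le_one_le)
      finally show ?thesis by (simp add: K_def Mm_def)
    qed
    have "min_action b f (m' n) (k' n) \<le> min_action b f (m n) (k n) + c * (real (m' n) - real (m n))"
      by (rule min_action_extend[OF bb fb kle mm kk'])
    then show ?case using N by (simp add: add_divide_distrib[symmetric] divide_right_mono)
  qed
  have "- \<Lambda> \<beta> * x' \<le> - \<Lambda> \<alpha> * x + c * (x' - x)"
    by (rule tendsto_le[OF _ tendsto_add[OF A Dconv] B ev]) simp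
  then show ?thesis by (simp add: algebra_simps)
qed

end

context S begin

lemma Lam1_nonneg: "\<Lambda> 1 \<ge> 0"
proof (rule ccontr)
  assume "\<not> \<Lambda> 1 \<ge> 0"
  then have neg: "\<Lambda> 1 < 0" by simp
  define \<delta> where "\<delta> = min c (- \<Lambda> 1 / 2)"
  have d: "\<delta> > 0" "\<delta> \<le> c" "\<delta> < - \<Lambda> 1" using neg c_pos by (auto simp: \<delta>_def)
  obtain f where fb: "\<forall>x. \<bar>f x\<bar> \<le> c" and AEg: "AE b in law_B. good {1} f b"
    using exists_f[of "{1}"] by auto
  have "AE b in law_B. eventually (\<lambda>M. min_action b (\<lambda>x. - f x) M (round0 (1 * real M)) \<le> - (\<delta> * real M)) sequentially"
    using AEg
  proof eventually_elim
    case (elim b)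
    then have cv: "(\<lambda>n. min_action b f n (round0 (1 * real n)) / real n) \<longlonglongrightarrow> - \<Lambda> 1"
      by (simp add: good_def conv_def)
    have "eventually (\<lambda>n. \<delta> < min_action b f n (round0 (1 * real n)) / real n) sequentially"
      by (rule order_tendstoD(1)[OF cv]) (use d in simp)
    then show ?case using eventually_gt_at_top[of 0]
    proof eventually_elim
      case (elim n)
      have r: "round0 (1 * real n) = int n" by (simp add: round0_def)
      have "\<delta> * real n < min_action b f n (int n)" using elim r by (simp add: field_simps)
      moreover have "min_action b (\<lambda>x. - f x) n (int n) = - min_action b f n (int n)"
        by (simp add: min_action_diag sum_negf)
      ultimately show ?case using r by simp
    qed
  qed
  moreover have "\<not> (AE b in law_B. eventually (\<lambda>M. min_action b (\<lambda>x. - f x) M (round0 (1 * real M)) \<le> - (\<delta> * real M)) sequentially)"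
    by (rule PB_contra[of "\<lambda>x. - f x" c]) (use fb c_pos d in auto)
  ultimately show False by simp
qed

lemma Lam_small:
  assumes d: "\<delta> > 0" "\<delta> \<le> c" and a: "0 < \<alpha>" "\<alpha> \<le> 1"
    and key: "(1 - \<alpha>) * ln (8 * c\<^sup>2 / \<delta>\<^sup>2) \<le> \<delta>\<^sup>2 / (8 * c\<^sup>2)"
  shows "\<Lambda> \<alpha> \<le> \<delta>"
proof (rule ccontr)
  assume "\<not> \<Lambda> \<alpha> \<le> \<delta>"
  then have big: "\<Lambda> \<alpha> > \<delta>" by simp
  obtain f where fb: "\<forall>x. \<bar>f x\<bar> \<le> c" and AEg: "AE b in law_B. good {\<alpha>} f b"
    using exists_f[of "{\<alpha>}"] a by auto
  have "AE b in law_B. eventually (\<lambda>M. min_action b f M (round0 (\<alpha> * real M)) \<le> - (\<delta> * real M)) sequentially"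
    using AEg
  proof eventually_elim
    case (elim b)
    then have cv: "(\<lambda>n. min_action b f n (round0 (\<alpha> * real n)) / real n) \<longlonglongrightarrow> - \<Lambda> \<alpha>"
      by (simp add: good_def conv_def)
    have "eventually (\<lambda>n. min_action b f n (round0 (\<alpha> * real n)) / real n < - \<delta>) sequentially"
      by (rule order_tendstoD(2)[OF cv]) (use big in simp)
    then show ?case using eventually_gt_at_top[of 0]
    proof eventually_elim
      case (elim n)
      then show ?case by (simp add: field_simps)
    qed
  qed
  moreover have "\<not> (AE b in law_B. eventually (\<lambda>M. min_action b f M (round0 (\<alpha> * real M)) \<le> - (\<delta> * real M)) sequentially)"
    by (rule PB_contra[of f c]) (use fb c_pos d a key in auto)
  ultimately show False by simp
qed

lemma Lam_right1:
  assumes "0 < \<beta>" "\<beta> \<le> 1"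
  shows "\<Lambda> 1 - 2 * c * (1 - \<beta>) \<le> \<Lambda> \<beta>"
proof (cases "\<beta> = 1")
  case True then show ?thesis using c_pos by simp
next
  case False
  then have b1: "\<beta> < 1" using assms by simp
  have "\<beta> * \<Lambda> 1 - c * (1 - \<beta>) \<le> 1 * \<Lambda> \<beta>"
    by (rule CI) (use assms b1 in auto)
  moreover have "(1 - \<beta>) * \<Lambda> 1 \<le> (1 - \<beta>) * c"
    using Lam_bound[of 1] b1 by (intro mult_left_mono) auto
  moreover have "\<Lambda> 1 - 2 * c * (1 - \<beta>) = (\<beta> * \<Lambda> 1 - c * (1 - \<beta>)) + ((1 - \<beta>) * \<Lambda> 1 - (1 - \<beta>) * c)"
    by (simp add: algebra_simps)
  ultimately show ?thesis by linarith
qed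

lemma Lam_cont_int:
  assumes a: "0 < \<alpha>" "\<alpha> < 1" and e: "e > 0"
  shows "\<exists>\<eta>>0. \<forall>\<beta>\<in>{0<..1}. \<bar>\<beta> - \<alpha>\<bar> < \<eta> \<longrightarrow> \<bar>\<Lambda> \<beta> - \<Lambda> \<alpha>\<bar> < e"
proof -
  define r where "r = (1 - \<alpha>) / 2"
  define d where "d = min (1/2) (e / (4 * c))"
  have r: "r > 0" "\<alpha> + 2 * r = 1" using a by (simp_all add: r_def field_simps)
  have d: "d > 0" "d \<le> 1/2" "2 * c * d \<le> e / 2" using e c_pos by (auto simp: d_def min_def field_simps)
  show ?thesis
  proof (intro exI[of _ "min (d * r) r"] conjI ballI impI)
    show "min (d * r) r > 0" using d r by simp
    fix \<beta> assume b: "\<beta> \<in> {0<..1}" and bd: "\<bar>\<beta> - \<alpha>\<bar> < min (d * r) r"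
    have bb: "\<beta> < \<alpha> + r" "\<beta> - \<alpha> < d * r" "\<alpha> - \<beta> < d * r" using bd by auto
    have dbt: "d * \<beta> \<le> d * (\<alpha> + r)" "0 \<le> d * \<beta>" using d b bb by (auto intro: mult_left_mono)
    have "d * (\<alpha> + r) + d * r = d * (\<alpha> + 2 * r)" by (simp add: algebra_simps)
    then have dd: "d * (\<alpha> + r) + d * r = d" using r(2) by simp
    have c1: "\<bar>\<beta> * (1 + d) - \<alpha> * 1\<bar> < (1 + d) - 1"
    proof -
      have "\<beta> * (1 + d) - \<alpha> * 1 = (\<beta> - \<alpha>) + d * \<beta>" by (simp add: algebra_simps)
      then show ?thesis unfolding abs_less_iff using bb dbt dd d by (intro conjI) linarith+
    qed
    have c2: "\<bar>\<alpha> * 1 - \<beta> * (1 - d)\<bar> < 1 - (1 - d)"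
    proof -
      have "\<alpha> * 1 - \<beta> * (1 - d) = (\<alpha> - \<beta>) + d * \<beta>" by (simp add: algebra_simps)
      then show ?thesis unfolding abs_less_iff using bb dbt dd d by (intro conjI) linarith+
    qed
    have I1: "1 * \<Lambda> \<alpha> - c * ((1 + d) - 1) \<le> (1 + d) * \<Lambda> \<beta>"
      by (rule CI) (use a b d c1 in auto)
    have I2: "(1 - d) * \<Lambda> \<beta> - c * (1 - (1 - d)) \<le> 1 * \<Lambda> \<alpha>"
      by (rule CI) (use a b d c2 in auto)
    have Lb: "\<bar>\<Lambda> \<beta>\<bar> \<le> c" using Lam_bound[of \<beta>] b by auto
    have p1a: "d * \<Lambda> \<beta> \<le> d * c" using Lb d by (intro mult_left_mono) (auto simp: abs_le_iff)
    have p1b: "d * (- c) \<le> d * \<Lambda> \<beta>" using Lb d by (intro mult_left_mono) (auto simp: abs_le_iff)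
    have p1: "d * \<Lambda> \<beta> \<le> d * c" "- (d * c) \<le> d * \<Lambda> \<beta>" using p1a p1b by auto
    have I1': "\<Lambda> \<alpha> - c * d \<le> \<Lambda> \<beta> + d * \<Lambda> \<beta>" using I1 by (simp add: algebra_simps)
    have I2': "\<Lambda> \<beta> - d * \<Lambda> \<beta> - c * d \<le> \<Lambda> \<alpha>" using I2 by (simp add: algebra_simps)
    have "d * c = c * d" by simp
    then show "\<bar>\<Lambda> \<beta> - \<Lambda> \<alpha>\<bar> < e"
      unfolding abs_less_iff using I1' I2' p1 d e by (intro conjI) linarith+
  qed
qed

lemma Lam_cont_1:
  assumes e: "e > 0"
  shows "\<exists>\<eta>>0. \<forall>\<beta>\<in>{0<..1}. \<bar>\<beta> - 1\<bar> < \<eta> \<longrightarrow> \<bar>\<Lambda> \<beta> - \<Lambda> 1\<bar> < e"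
proof -
  define \<delta> where "\<delta> = min c (e / 2)"
  define L where "L = ln (8 * c\<^sup>2 / \<delta>\<^sup>2)"
  define q where "q = \<delta>\<^sup>2 / (8 * c\<^sup>2)"
  have d: "\<delta> > 0" "\<delta> \<le> c" "\<delta> \<le> e / 2" using e c_pos by (auto simp: \<delta>_def)
  have q: "q > 0" using d c_pos by (simp add: q_def)
  have L: "L \<ge> 0"
  proof -
    have "\<delta>\<^sup>2 \<le> c\<^sup>2" using d by (intro power_mono) auto
    moreover have "0 < c\<^sup>2" using c_pos by simp
    ultimately have "\<delta>\<^sup>2 \<le> 8 * c\<^sup>2" by linarith
    then have "1 \<le> 8 * c\<^sup>2 / \<delta>\<^sup>2" using d by (simp add: field_simps)
    then show ?thesis by (simp add: L_def)
  qed
  define \<eta> where "\<eta> = min (e / (2 * c)) (q / (L + 1))"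
  have eta: "\<eta> > 0" using e c_pos q L by (simp add: \<eta>_def)
  show ?thesis
  proof (intro exI[of _ \<eta>] conjI ballI impI eta)
    fix \<beta> assume b: "\<beta> \<in> {0<..1}" and bd: "\<bar>\<beta> - 1\<bar> < \<eta>"
    have b1: "0 \<le> 1 - \<beta>" "1 - \<beta> < \<eta>" using b bd by auto
    have "(1 - \<beta>) * L \<le> (1 - \<beta>) * (L + 1)" using b1 by (intro mult_left_mono) auto
    also have "\<dots> \<le> \<eta> * (L + 1)" using b1 L by (intro mult_right_mono) auto
    also have "\<dots> \<le> q / (L + 1) * (L + 1)" using L by (intro mult_right_mono) (auto simp: \<eta>_def)
    also have "\<dots> = q" using L by simp
    finally have key: "(1 - \<beta>) * ln (8 * c\<^sup>2 / \<delta>\<^sup>2) \<le> \<delta>\<^sup>2 / (8 * c\<^sup>2)" by (simp add: L_def q_def)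
    have up: "\<Lambda> \<beta> \<le> \<delta>" by (rule Lam_small[OF d(1,2) _ _ key]) (use b in auto)
    have lo: "\<Lambda> 1 - 2 * c * (1 - \<beta>) \<le> \<Lambda> \<beta>" by (rule Lam_right1) (use b in auto)
    have "2 * c * (1 - \<beta>) < 2 * c * \<eta>" using b1 c_pos by simp
    also have "\<dots> \<le> e" using c_pos by (simp add: \<eta>_def min_def field_simps)
    finally have "2 * c * (1 - \<beta>) < e" .
    then show "\<bar>\<Lambda> \<beta> - \<Lambda> 1\<bar> < e" using up lo Lam1_nonneg d unfolding abs_less_iff by (intro conjI) linarith+
  qed
qed

lemma Lam_cont: "continuous_on {0<..1} \<Lambda>"
  unfolding continuous_on_iff
proof (intro ballI allI impI)
  fix \<alpha> e :: real assume a: "\<alpha> \<in> {0<..1}" and e: "e > 0"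
  obtain \<eta> where eta: "\<eta> > 0" "\<forall>\<beta>\<in>{0<..1}. \<bar>\<beta> - \<alpha>\<bar> < \<eta> \<longrightarrow> \<bar>\<Lambda> \<beta> - \<Lambda> \<alpha>\<bar> < e"
  proof (cases "\<alpha> = 1")
    case True then show ?thesis using Lam_cont_1[OF e] that by auto
  next
    case False then show ?thesis using Lam_cont_int[OF _ _ e, of \<alpha>] a that by auto
  qed
  then show "\<exists>d>0. \<forall>x'\<in>{0<..1}. dist x' \<alpha> < d \<longrightarrow> dist (\<Lambda> x') (\<Lambda> \<alpha>) < e"
    by (auto simp: dist_real_def)
qed

lemma G_cont: "continuous_on {1..} (\<lambda>t. t * \<Lambda> (1 / t))"
proof -
  have c1: "continuous_on {1..} (\<lambda>t::real. 1 / t)" by (intro continuous_intros) auto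
  have sub: "(\<lambda>t::real. 1 / t) ` {1..} \<subseteq> {0<..1}" by (auto simp: field_simps)
  show ?thesis
    by (intro continuous_on_mult continuous_on_id continuous_on_compose2[OF Lam_cont c1 sub])
qed

end

lemma ceil_bounds:
  assumes "0 \<le> y"
  shows "y \<le> real (nat \<lceil>y\<rceil>) \<and> real (nat \<lceil>y\<rceil>) \<le> y + 1"
proof -
  have "0 \<le> \<lceil>y\<rceil>" using assms by simp
  then have "real (nat \<lceil>y\<rceil>) = real_of_int \<lceil>y\<rceil>" by simp
  then show ?thesis using ceiling_correct[of y] by linarith
qed

lemma nat_ceil_mono: "y \<le> z \<Longrightarrow> nat \<lceil>y\<rceil> \<le> nat \<lceil>z\<rceil>"
  by (intro nat_mono ceiling_mono)

lemma round_ceil: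
  assumes t: "t' \<ge> 1"
  shows "round0 (1 / t' * real (nat \<lceil>t' * real n\<rceil>)) = int n"
proof -
  define q where "q = real (nat \<lceil>t' * real n\<rceil>)"
  have qb: "t' * real n \<le> q" "q \<le> t' * real n + 1" using ceil_bounds[of "t' * real n"] t by (auto simp: q_def)
  have q0: "q \<ge> 0" unfolding q_def by simp
  have y1: "real n \<le> q / t'" using qb t by (simp add: field_simps)
  have "q < t' * real n + 1" using ceiling_correct[of "t' * real n"] t
    by (simp add: q_def)
  also have "\<dots> \<le> t' * (real n + 1)" using t by (simp add: algebra_simps)
  finally have y2: "q / t' < real n + 1" using t by (simp add: field_simps)
  have "round0 (q / t') = \<lfloor>q / t'\<rfloor>" using q0 t by (simp add: round0_def)
  also have "\<dots> = int n" using y1 y2 by (simp add: floor_eq_iff)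
  finally show ?thesis by (simp add: q_def)
qed

context S begin

definition Aset :: "real set" where "Aset = (\<lambda>t. 1 / t) ` {t \<in> \<rat>. 1 \<le> t}"

lemma Aset_countable: "countable Aset"
  unfolding Aset_def by (intro countable_image countable_subset[OF _ countable_rat]) auto

lemma Aset_sub: "Aset \<subseteq> {-1..1}"
  unfolding Aset_def by (auto simp: field_simps)

lemma conv_D:
  assumes g: "good Aset f b" and t: "t' \<in> \<rat>" "t' \<ge> 1"
  shows "(\<lambda>n. min_action b f (nat \<lceil>t' * real n\<rceil>) (int n) / real n) \<longlonglongrightarrow> - (t' * \<Lambda> (1 / t'))"
proof -
  have "1 / t' \<in> Aset" using t by (auto simp: Aset_def)
  then have cv: "(\<lambda>M. min_action b f M (round0 (1 / t' * real M)) / real M) \<longlonglongrightarrow> - \<Lambda> (1 / t')"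
    using g by (auto simp: good_def conv_def)
  have "(\<lambda>n. min_action b f (nat \<lceil>t' * real n\<rceil>) (round0 (1 / t' * real (nat \<lceil>t' * real n\<rceil>))) / real n)
      \<longlonglongrightarrow> - \<Lambda> (1 / t') * t'"
    by (rule scaled_conv[OF cv]) (use t in simp)
  then show ?thesis using round_ceil[OF t(2)] by (simp add: mult.commute)
qed

lemma DET:
  assumes g: "good Aset f b" and ts: "\<And>n. ts n \<ge> 1" and lim: "ts \<longlonglongrightarrow> t"
  shows "(\<lambda>n. min_action b f (nat \<lceil>ts n * real n\<rceil>) (int n) / real n) \<longlonglongrightarrow> - t * \<Lambda> (1 / t)"
proof -
  have fb: "\<And>y. \<bar>f y\<bar> \<le> c" and bb: "\<And>i. \<bar>b i\<bar> \<le> 1" using g by (auto simp: good_def)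
  have t1: "t \<ge> 1" by (rule LIMSEQ_le_const[OF lim]) (use ts in auto)
  define G where "G s = s * \<Lambda> (1 / s)" for s
  define X where "X n = min_action b f (nat \<lceil>ts n * real n\<rceil>) (int n) / real n" for n
  have "\<forall>e>0. eventually (\<lambda>n. dist (X n) (- G t) < e) sequentially"
  proof (intro allI impI)
    fix e :: real assume e: "e > 0"
    obtain \<eta> where eta: "\<eta> > 0" "\<And>s. s \<in> {1..} \<Longrightarrow> dist s t < \<eta> \<Longrightarrow> dist (G s) (G t) < e / 5"
      using G_cont t1 e unfolding continuous_on_iff G_def
      by (metis atLeast_iff divide_pos_pos zero_less_numeral)
    define h where "h = min \<eta> (e / (5 * c))"
    have h: "h > 0" "h \<le> \<eta>" "c * h \<le> e / 5" using eta e c_pos by (auto simp: h_def min_def field_simps)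
    obtain t2 where t2: "t2 \<in> \<rat>" "t < t2" "t2 < t + h" using Rats_dense_in_real[of t "t + h"] h by auto
    obtain t1' where t1': "t1' \<in> \<rat>" "1 \<le> t1'" "t1' \<le> t" "t - t1' < h" "t1' = 1 \<or> t1' < t"
    proof (cases "t = 1")
      case True then show ?thesis using that[of 1] h by auto
    next
      case False
      then have "max 1 (t - h) < t" using t1 h by auto
      then obtain r where "r \<in> \<rat>" "max 1 (t - h) < r" "r < t" using Rats_dense_in_real by blast
      then show ?thesis using that[of r] by auto
    qed
    have G2: "\<bar>G t2 - G t\<bar> < e / 5" using eta(2)[of t2] t2 t1 h by (auto simp: dist_real_def)
    have G1: "\<bar>G t1' - G t\<bar> < e / 5" using eta(2)[of t1'] t1' t1 h by (auto simp: dist_real_def)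
    have c2: "c * (t2 - t) < e / 5"
    proof -
      have "c * (t2 - t) < c * h" using t2 c_pos by simp
      then show ?thesis using h by linarith
    qed
    have c1: "c * (t - t1') < e / 5"
    proof -
      have "c * (t - t1') < c * h" using t1' c_pos by simp
      then show ?thesis using h by linarith
    qed
    have E1: "eventually (\<lambda>n. dist (min_action b f (nat \<lceil>t2 * real n\<rceil>) (int n) / real n) (- G t2) < e / 5) sequentially"
    proof -
      have "(\<lambda>n. min_action b f (nat \<lceil>t2 * real n\<rceil>) (int n) / real n) \<longlonglongrightarrow> - (t2 * \<Lambda> (1 / t2))"
        by (rule conv_D[OF g t2(1)]) (use t2 t1 in auto)
      from this[unfolded tendsto_iff, rule_format, of "e / 5"] e show ?thesis by (simp add: G_def)
    qed
    have E2: "eventually (\<lambda>n. dist (min_action b f (nat \<lceil>t1' * real n\<rceil>) (int n) / real n) (- G t1') < e / 5) sequentially"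
    proof -
      have "(\<lambda>n. min_action b f (nat \<lceil>t1' * real n\<rceil>) (int n) / real n) \<longlonglongrightarrow> - (t1' * \<Lambda> (1 / t1'))"
        by (rule conv_D[OF g t1'(1,2)])
      from this[unfolded tendsto_iff, rule_format, of "e / 5"] e show ?thesis by (simp add: G_def)
    qed
    have E3: "eventually (\<lambda>n. ts n < t2) sequentially" by (rule order_tendstoD(2)[OF lim t2(2)])
    have E4: "eventually (\<lambda>n. t1' \<le> ts n) sequentially"
    proof (cases "t1' = 1")
      case True then show ?thesis using ts by simp
    next
      case False then have "t1' < t" using t1' by auto
      from order_tendstoD(1)[OF lim this] show ?thesis by eventually_elim simp
    qed
    have ec: "e / (10 * c) > 0" using e c_pos by simp
    have E5: "eventually (\<lambda>n. dist (ts n) t < e / (10 * c)) sequentially"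
      using lim[unfolded tendsto_iff, rule_format, OF ec] .
    have inv0: "(\<lambda>n. 1 / real n) \<longlonglongrightarrow> 0" by real_asymp
    have E6: "eventually (\<lambda>n. 1 / real n < e / (10 * c)) sequentially"
      by (rule order_tendstoD(2)[OF inv0 ec])
    show "eventually (\<lambda>n. dist (X n) (- G t) < e) sequentially"
      using E1 E2 E3 E4 E5 E6 eventually_gt_at_top[of 0]
    proof eventually_elim
      case (elim n)
      define N where "N = real n"
      have N: "N > 0" using elim by (simp add: N_def)
      define mn where "mn = nat \<lceil>ts n * real n\<rceil>"
      define M2 where "M2 = nat \<lceil>t2 * real n\<rceil>"
      define M1 where "M1 = nat \<lceil>t1' * real n\<rceil>"
      have bmn: "ts n * N \<le> real mn" "real mn \<le> ts n * N + 1"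
        using ceil_bounds[of "ts n * real n"] ts[of n] by (auto simp: mn_def N_def)
      have bM2: "t2 * N \<le> real M2" "real M2 \<le> t2 * N + 1"
        using ceil_bounds[of "t2 * real n"] t2 t1 by (auto simp: M2_def N_def)
      have bM1: "t1' * N \<le> real M1" "real M1 \<le> t1' * N + 1"
        using ceil_bounds[of "t1' * real n"] t1' by (auto simp: M1_def N_def)
      have le2: "mn \<le> M2" unfolding mn_def M2_def
        by (intro nat_ceil_mono mult_right_mono) (use elim in auto)
      have le1: "M1 \<le> mn" unfolding mn_def M1_def
        by (intro nat_ceil_mono mult_right_mono) (use elim in auto)
      have nmn: "\<bar>int n\<bar> \<le> int mn"
      proof -
        have "real n \<le> ts n * real n" using mult_right_mono[OF ts[of n], of "real n"] by simp
        then show ?thesis using bmn by (simp add: N_def)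
      qed
      have nM1: "\<bar>int n\<bar> \<le> int M1"
      proof -
        have "real n \<le> t1' * real n" using mult_right_mono[OF t1'(2), of "real n"] by simp
        then show ?thesis using bM1 by (simp add: N_def)
      qed
      have ext2: "min_action b f M2 (int n) \<le> min_action b f mn (int n) + c * (real M2 - real mn)"
        by (rule min_action_extend[OF bb fb nmn le2]) (use le2 in simp)
      have ext1: "min_action b f mn (int n) \<le> min_action b f M1 (int n) + c * (real mn - real M1)"
        by (rule min_action_extend[OF bb fb nM1 le1]) (use le1 in simp)
      define Y2 where "Y2 = min_action b f M2 (int n) / N"
      define Y1 where "Y1 = min_action b f M1 (int n) / N"
      define Z where "Z = min_action b f mn (int n) / N"
      have XZ: "X n = Z" by (simp add: X_def Z_def mn_def N_def)
      have Y2b: "\<bar>Y2 - - G t2\<bar> < e / 5" using elim(1) by (simp add: Y2_def M2_def N_def dist_real_def)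
      have Y1b: "\<bar>Y1 - - G t1'\<bar> < e / 5" using elim(2) by (simp add: Y1_def M1_def N_def dist_real_def)
      have q2: "c * (real M2 - real mn) / N < 2 * e / 5"
      proof -
        have "real M2 - real mn \<le> (t2 - ts n) * N + 1" using bM2 bmn by (simp add: algebra_simps)
        then have "(real M2 - real mn) / N \<le> ((t2 - ts n) * N + 1) / N" using N by (simp add: divide_right_mono)
        also have "\<dots> = (t2 - ts n) + 1 / N" using N by (simp add: field_simps)
        finally have a: "(real M2 - real mn) / N \<le> (t2 - t) + (t - ts n) + 1 / N" by simp
        have b: "\<bar>ts n - t\<bar> < e / (10 * c)" using elim(5) by (simp add: dist_real_def)
        have b2: "1 / N < e / (10 * c)" using elim(6) by (simp add: N_def)
        have "(real M2 - real mn) / N < (t2 - t) + e / (10 * c) + e / (10 * c)"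
          using a b[unfolded abs_less_iff] b2 by linarith
        then have "c * ((real M2 - real mn) / N) < c * ((t2 - t) + e / (10 * c) + e / (10 * c))"
          using c_pos by (intro mult_strict_left_mono) auto
        also have "\<dots> = c * (t2 - t) + e / 5" using c_pos by (simp add: field_simps)
        finally have fin: "c * ((real M2 - real mn) / N) < c * (t2 - t) + e / 5" .
        have "c * (real M2 - real mn) / N = c * ((real M2 - real mn) / N)" by simp
        then show ?thesis using fin c2 by linarith
      qed
      have q1: "c * (real mn - real M1) / N < 2 * e / 5"
      proof -
        have "real mn - real M1 \<le> (ts n - t1') * N + 1" using bM1 bmn by (simp add: algebra_simps)
        then have "(real mn - real M1) / N \<le> ((ts n - t1') * N + 1) / N" using N by (simp add: divide_right_mono)
        also have "\<dots> = (ts n - t1') + 1 / N" using N by (simp add: field_simps)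
        finally have a: "(real mn - real M1) / N \<le> (t - t1') + (ts n - t) + 1 / N" by simp
        have b: "\<bar>ts n - t\<bar> < e / (10 * c)" using elim(5) by (simp add: dist_real_def)
        have b2: "1 / N < e / (10 * c)" using elim(6) by (simp add: N_def)
        have "(real mn - real M1) / N < (t - t1') + e / (10 * c) + e / (10 * c)"
          using a b[unfolded abs_less_iff] b2 by linarith
        then have "c * ((real mn - real M1) / N) < c * ((t - t1') + e / (10 * c) + e / (10 * c))"
          using c_pos by (intro mult_strict_left_mono) auto
        also have "\<dots> = c * (t - t1') + e / 5" using c_pos by (simp add: field_simps)
        finally have fin: "c * ((real mn - real M1) / N) < c * (t - t1') + e / 5" .
        have "c * (real mn - real M1) / N = c * ((real mn - real M1) / N)" by simp
        then show ?thesis using fin c1 by linarith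
      qed
      have z2: "Y2 \<le> Z + c * (real M2 - real mn) / N"
        using ext2 N by (simp add: Y2_def Z_def add_divide_distrib[symmetric] divide_right_mono)
      have z1: "Z \<le> Y1 + c * (real mn - real M1) / N"
        using ext1 N by (simp add: Y1_def Z_def add_divide_distrib[symmetric] divide_right_mono)
      show ?case unfolding XZ dist_real_def
        using z1 z2 q1 q2 Y1b Y2b G1 G2 unfolding abs_less_iff by (intro conjI) linarith+
    qed
  qed
  then show ?thesis unfolding tendsto_iff X_def G_def by simp
qed

end

context S begin

lemma main_f:
  assumes H: "AE b in law_B. good Aset f b"
  shows "\<forall>(ts :: nat \<Rightarrow> real) (t :: real). (\<forall>n. ts n \<ge> 1) \<and> ts \<longlonglongrightarrow> t \<longrightarrow>
             (AE b in law_B.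
                (\<lambda>n. min_action b f (nat \<lceil>ts n * real n\<rceil>) (int n) / real n)
                  \<longlonglongrightarrow> - t * \<Lambda> (1 / t)) \<and>
             ((\<lambda>n. (\<integral>b. min_action b f (nat \<lceil>ts n * real n\<rceil>) (int n) \<partial>law_B) / real n)
                  \<longlonglongrightarrow> - t * \<Lambda> (1 / t))"
proof (intro allI impI conjI)
  fix ts :: "nat \<Rightarrow> real" and t :: real
  assume a: "(\<forall>n. ts n \<ge> 1) \<and> ts \<longlonglongrightarrow> t"
  then have ts: "\<And>n. ts n \<ge> 1" and lim: "ts \<longlonglongrightarrow> t" by auto
  interpret prob_space law_B by (rule prob_B)
  have AEc: "AE b in law_B. (\<lambda>n. min_action b f (nat \<lceil>ts n * real n\<rceil>) (int n) / real n) \<longlonglongrightarrow> - t * \<Lambda> (1 / t)"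
    using H by eventually_elim (rule DET[OF _ ts lim])
  then show "AE b in law_B. (\<lambda>n. min_action b f (nat \<lceil>ts n * real n\<rceil>) (int n) / real n) \<longlonglongrightarrow> - t * \<Lambda> (1 / t)" .
  obtain b0 where "good Aset f b0" using AE_exists[OF prob_B H] by blast
  then have fb: "\<And>y. \<bar>f y\<bar> \<le> c" by (auto simp: good_def)
  obtain B where B: "B > 0" "\<And>n. norm (ts n) \<le> B"
    using convergent_imp_Bseq[OF convergentI[OF lim]] unfolding Bseq_def by auto
  define m where "m n = nat \<lceil>ts n * real n\<rceil>" for n
  have mb: "real (m n) \<le> ts n * real n + 1" "real n \<le> real (m n)" for n
  proof -
    have "0 \<le> ts n * real n" using ts[of n] by simp
    from ceil_bounds[OF this] have "ts n * real n \<le> real (m n)" "real (m n) \<le> ts n * real n + 1"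
      by (auto simp: m_def)
    moreover have "real n \<le> ts n * real n" using mult_right_mono[OF ts[of n], of "real n"] by simp
    ultimately show "real (m n) \<le> ts n * real n + 1" "real n \<le> real (m n)" by auto
  qed
  have kn: "\<bar>int n\<bar> \<le> int (m n)" for n using mb(2)[of n] by simp
  have meas: "(\<lambda>b. min_action b f (m n) (int n) / real n) \<in> borel_measurable law_B" for n
    using min_action_meas[OF kn] by measurable
  have bound: "AE b in law_B. norm (min_action b f (m n) (int n) / real n) \<le> c * (B + 1)" for n
    using H
  proof eventually_elim
    case (elim b)
    then have bb: "\<And>i. \<bar>b i\<bar> \<le> 1" by (auto simp: good_def)
    have mab: "\<bar>min_action b f (m n) (int n)\<bar> \<le> c * real (m n)"
      by (rule min_action_bound[OF bb fb kn])
    show ?case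
    proof (cases "n = 0")
      case True then show ?thesis using c_pos B by simp
    next
      case False
      then have N: "real n > 0" by simp
      have "real (m n) \<le> B * real n + 1"
        using mb(1)[of n] B(2)[of n] N by (smt (verit) mult_right_mono of_nat_0_le_iff real_norm_def abs_le_D1)
      also have "\<dots> \<le> (B + 1) * real n" using False by (simp add: algebra_simps)
      finally have "c * real (m n) \<le> c * ((B + 1) * real n)" using c_pos by simp
      with mab have "\<bar>min_action b f (m n) (int n)\<bar> \<le> c * (B + 1) * real n" by simp
      then show ?thesis using N by (simp add: field_simps)
    qed
  qed
  have "(\<lambda>n. integral\<^sup>L law_B (\<lambda>b. min_action b f (m n) (int n) / real n)) \<longlonglongrightarrow> integral\<^sup>L law_B (\<lambda>b. - t * \<Lambda> (1 / t))"
    by (rule integral_dominated_convergence[where w="\<lambda>_. c * (B + 1)"])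
       (use meas bound AEc in \<open>auto simp: m_def\<close>)
  then show "(\<lambda>n. (\<integral>b. min_action b f (nat \<lceil>ts n * real n\<rceil>) (int n) \<partial>law_B) / real n) \<longlonglongrightarrow> - t * \<Lambda> (1 / t)"
    by (simp add: m_def prob_space.prob_space[OF prob_B])
qed

end

theorem lemma4p2:
  fixes c q \<kappa> :: real and \<rho> \<Lambda> :: "real \<Rightarrow> real"
  assumes c_pos: "c > 0" and q_pos: "q > 0" and kappa: "\<kappa> > -1"
    and dens: "(\<rho> has_integral 1) UNIV"
    and even: "\<And>x. \<rho> (-x) = \<rho> x"
    and cont: "continuous_on {-c<..<c} \<rho>"
    and pos: "\<And>x. x \<in> {-c<..<c} \<Longrightarrow> \<rho> x > 0"
    and zero: "\<And>x. x \<notin> {-c<..<c} \<Longrightarrow> \<rho> x = 0"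
    and edge: "((\<lambda>x. \<rho> x / \<bar>c - x\<bar> powr \<kappa>) \<longlongrightarrow> q) (at_left c)"
    and shape: "is_shape_function \<rho> \<Lambda>"
  shows "AE f in law_F \<rho>.
           \<forall>(ts :: nat \<Rightarrow> real) (t :: real). (\<forall>n. ts n \<ge> 1) \<and> ts \<longlonglongrightarrow> t \<longrightarrow>
             (AE b in law_B.
                (\<lambda>n. min_action b f (nat \<lceil>ts n * real n\<rceil>) (int n) / real n)
                  \<longlonglongrightarrow> - t * \<Lambda> (1 / t)) \<and>
             ((\<lambda>n. (\<integral>b. min_action b f (nat \<lceil>ts n * real n\<rceil>) (int n) \<partial>law_B) / real n)
                  \<longlonglongrightarrow> - t * \<Lambda> (1 / t))"
proof -
  interpret S c \<rho> \<Lambda> by (rule S.intro[OF c_pos dens cont pos zero shape])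
  have "AE f in law_F \<rho>. AE b in law_B. good Aset f b"
    by (rule AE_good[OF Aset_countable Aset_sub])
  then show ?thesis by eventually_elim (rule main_f)
qed

end
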